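(* Let $m\geq1$, let $X$ be a weak complicial set in which every $k$-simplex is thin for every $k\geq m$, and let $x\in X_0$ be a vertex. Then for every $n\geq m$ the homotopy monoid $\tau_n(X,x)$ is a group.
   Context: A stratified simplicial set is a pair $(X,tX)$ where $X$ is a simplicial set and $tX$ is a set of simplices of $X$ (thin simplices) containing all degenerate simplices and no $0$-simplices; stratified maps are simplicial maps preserving thin simplices. A regular stratified subset $(X,tX)\subset(Y,tY)$ means $X\subset Y$, $tX=X\cap tY$. For $n\ge1$, $\Delta[n]_t$ is $\Delta[n]$ with thin simplices the degenerate ones and $\mathrm{Id}_{[n]}$. For $k\in[n]$, $\Delta^k[n]$ is $\Delta[n]$ with thin simplices the degenerate ones and all $\alpha:[m]\to[n]$ with $\{k-1,k,k+1\}\cap[n]\subset\mathrm{Im}(\alpha)$; $\Lambda^k[n]$ is the regular stratified subset of $\Delta^k[n]$ generated by the faces $\delta_i$, $i\neq k$; $\Delta^k[n]''$ (resp. $\Lambda^k[n]'$) is $\Delta^k[n]$ (resp. $\Lambda^k[n]$) with additionally all its $(n-1)$-simplices thin; $\Delta^k[n]'=\Delta^k[n]\cup\Lambda^k[n]'$. A weak complicial set is a stratified simplicial set with the right lifting property against $\Lambda^k[n]\hookrightarrow\Delta^k[n]$ ($n\ge1$, $k\in[n]$) and $\Delta^k[n]'\hookrightarrow\Delta^k[n]''$ ($n\ge2$, $k\in[n]$). The product $X\circledast Y$ has underlying simplicial set $X\times Y$, with $(x,y)$ thin iff $x$ and $y$ are thin. For stratified maps $f,g:A\to X$ and an inclusion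 $B\hookrightarrow A$ with $f|_B=g|_B$, $f\sim_B g$ means there is a stratified map $H:A\circledast\Delta[1]_t\to X$ with $H|_{A\times\{0\}}=f$, $H|_{A\times\{1\}}=g$ and $H|_{B\circledast\Delta[1]_t}=f|_B\circ\mathrm{proj}_B$; $n$-simplices are regarded as stratified maps from $\Delta[n]$ with only degenerate simplices thin. For $n\ge1$, $\tau_n(X,x)$ is the set of $\sim_{\partial\Delta[n]}$-classes of $n$-simplices $\alpha$ whose restriction to $\partial\Delta[n]$ is constant at $x$, with multiplication $[\alpha][\beta]=[d_n\theta]$ where $\theta:\Delta^n[n+1]\to X$ is any stratified map with $d_{n-1}\theta=\alpha$, $d_{n+1}\theta=\beta$, and $d_i\theta$ constant at $x$ for $i\notin\{n-1,n,n+1\}$; this is a monoid with unit the class of the constant simplex at $x$. *)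

theory Defs
  imports "HOL-Algebra.Group"
begin

text \<open>A monotone map [m] -> [n], represented by its values on {..m}.\<close>
definition mono_map :: "nat \<Rightarrow> nat \<Rightarrow> (nat \<Rightarrow> nat) \<Rightarrow> bool" where
  "mono_map m n \<alpha> \<longleftrightarrow> (\<forall>i\<le>m. \<alpha> i \<le> n) \<and> (\<forall>i j. i \<le> j \<longrightarrow> j \<le> m \<longrightarrow> \<alpha> i \<le> \<alpha> j)"

text \<open>Simp X n = set of n-simplices; Act X n m a x = x . a for x an n-simplex and
  a : [m] -> [n] monotone; Thin X n = thin n-simplices.\<close>
record 'a sset =
  Simp :: "nat \<Rightarrow> 'a set"
  Act :: "nat \<Rightarrow> nat \<Rightarrow> (nat \<Rightarrow> nat) \<Rightarrow> 'a \<Rightarrow> 'a"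
  Thin :: "nat \<Rightarrow> 'a set"

definition simplicial_set :: "'a sset \<Rightarrow> bool" where
  "simplicial_set X \<longleftrightarrow>
     (\<forall>n m \<alpha> x. mono_map m n \<alpha> \<longrightarrow> x \<in> Simp X n \<longrightarrow> Act X n m \<alpha> x \<in> Simp X m)
   \<and> (\<forall>n x. x \<in> Simp X n \<longrightarrow> Act X n n (\<lambda>i. i) x = x)
   \<and> (\<forall>n m k \<alpha> \<beta> x. mono_map m n \<alpha> \<longrightarrow> mono_map k m \<beta> \<longrightarrow> x \<in> Simp X n \<longrightarrow>
        Act X m k \<beta> (Act X n m \<alpha> x) = Act X n k (\<alpha> \<circ> \<beta>) x)
   \<and> (\<forall>n m \<alpha> \<beta> x. mono_map m n \<alpha> \<longrightarrow> (\<forall>i\<le>m. \<alpha> i = \<beta> i) \<longrightarrow> x \<in> Simp X n \<longrightarrow>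
        Act X n m \<alpha> x = Act X n m \<beta> x)"

definition degenerate :: "'a sset \<Rightarrow> nat \<Rightarrow> 'a set" where
  "degenerate X m = {Act X k m \<alpha> y | k \<alpha> y. mono_map m k \<alpha> \<and> \<not> inj_on \<alpha> {..m} \<and> y \<in> Simp X k}"

definition stratified :: "'a sset \<Rightarrow> bool" where
  "stratified X \<longleftrightarrow> simplicial_set X
   \<and> (\<forall>n. Thin X n \<subseteq> Simp X n) \<and> Thin X 0 = {}
   \<and> (\<forall>n. degenerate X n \<subseteq> Thin X n)"

definition smap :: "'a sset \<Rightarrow> 'b sset \<Rightarrow> (nat \<Rightarrow> 'a \<Rightarrow> 'b) \<Rightarrow> bool" where
  "smap A X f \<longleftrightarrow>
     (\<forall>n x. x \<in> Simp A n \<longrightarrow> f n x \<in> Simp X n)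
   \<and> (\<forall>n x. x \<in> Thin A n \<longrightarrow> f n x \<in> Thin X n)
   \<and> (\<forall>n m \<alpha> x. mono_map m n \<alpha> \<longrightarrow> x \<in> Simp A n \<longrightarrow> f m (Act A n m \<alpha> x) = Act X n m \<alpha> (f n x))"

text \<open>Right lifting property of X against an inclusion A \<subseteq> B (A a stratified subset
  of B with the same action).\<close>
definition rlp :: "'b sset \<Rightarrow> 'b sset \<Rightarrow> 'a sset \<Rightarrow> bool" where
  "rlp A B X \<longleftrightarrow> (\<forall>f. smap A X f \<longrightarrow>
      (\<exists>g. smap B X g \<and> (\<forall>n y. y \<in> Simp A n \<longrightarrow> g n y = f n y)))"

text \<open>m-simplices of Delta[n]: monotone maps [m] -> [n], normalised to 0 outside {..m}.\<close>
definition dsimp :: "nat \<Rightarrow> nat \<Rightarrow> (nat \<Rightarrow> nat) set" where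
  "dsimp n m = {\<alpha>. mono_map m n \<alpha> \<and> (\<forall>i>m. \<alpha> i = 0)}"

definition dact :: "nat \<Rightarrow> nat \<Rightarrow> (nat \<Rightarrow> nat) \<Rightarrow> (nat \<Rightarrow> nat) \<Rightarrow> (nat \<Rightarrow> nat)" where
  "dact k m \<beta> \<alpha> = (\<lambda>i. if i \<le> m then \<alpha> (\<beta> i) else 0)"

definition ddegen :: "nat \<Rightarrow> nat \<Rightarrow> (nat \<Rightarrow> nat) set" where
  "ddegen n m = {\<alpha> \<in> dsimp n m. \<not> inj_on \<alpha> {..m}}"

definition did :: "nat \<Rightarrow> nat \<Rightarrow> nat" where
  "did n = (\<lambda>i. if i \<le> n then i else 0)"

text \<open>Delta[n] with thin set T (sub-simplicial sets are obtained by restricting S).\<close>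
definition dstd :: "(nat \<Rightarrow> (nat \<Rightarrow> nat) set) \<Rightarrow> (nat \<Rightarrow> (nat \<Rightarrow> nat) set) \<Rightarrow> (nat \<Rightarrow> nat) sset" where
  "dstd S T = \<lparr>Simp = S, Act = dact, Thin = T\<rparr>"

definition Delta :: "nat \<Rightarrow> (nat \<Rightarrow> nat) sset" where
  "Delta n = dstd (dsimp n) (ddegen n)"

definition Delta_t :: "nat \<Rightarrow> (nat \<Rightarrow> nat) sset" where
  "Delta_t n = dstd (dsimp n) (\<lambda>m. ddegen n m \<union> (if m = n then {did n} else {}))"

definition nbhd :: "nat \<Rightarrow> nat \<Rightarrow> nat set" where
  "nbhd k n = {j. j \<le> n \<and> (j + 1 = k \<or> j = k \<or> j = k + 1)}"

definition thin_k :: "nat \<Rightarrow> nat \<Rightarrow> nat \<Rightarrow> (nat \<Rightarrow> nat) set" where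
  "thin_k k n m = ddegen n m \<union> {\<alpha> \<in> dsimp n m. nbhd k n \<subseteq> \<alpha> ` {..m}}"

definition Delta_k :: "nat \<Rightarrow> nat \<Rightarrow> (nat \<Rightarrow> nat) sset" where
  "Delta_k k n = dstd (dsimp n) (thin_k k n)"

text \<open>m-simplices of the horn Lambda^k[n]: those factoring through some face d_i, i \<noteq> k.\<close>
definition horn_simp :: "nat \<Rightarrow> nat \<Rightarrow> nat \<Rightarrow> (nat \<Rightarrow> nat) set" where
  "horn_simp k n m = {\<alpha> \<in> dsimp n m. \<exists>i\<le>n. i \<noteq> k \<and> i \<notin> \<alpha> ` {..m}}"

text \<open>Lambda^k[n], regular stratified subset of Delta^k[n].\<close>
definition Lambda_k :: "nat \<Rightarrow> nat \<Rightarrow> (nat \<Rightarrow> nat) sset" where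
  "Lambda_k k n = dstd (horn_simp k n) (\<lambda>m. horn_simp k n m \<inter> thin_k k n m)"

text \<open>Delta^k[n]'' : additionally all (n-1)-simplices thin.\<close>
definition Delta_k2 :: "nat \<Rightarrow> nat \<Rightarrow> (nat \<Rightarrow> nat) sset" where
  "Delta_k2 k n = dstd (dsimp n) (\<lambda>m. thin_k k n m \<union> (if m = n - 1 then dsimp n m else {}))"

text \<open>Delta^k[n]' = Delta^k[n] \<union> Lambda^k[n]'.\<close>
definition Delta_k1 :: "nat \<Rightarrow> nat \<Rightarrow> (nat \<Rightarrow> nat) sset" where
  "Delta_k1 k n = dstd (dsimp n) (\<lambda>m. thin_k k n m \<union> (if m = n - 1 then horn_simp k n m else {}))"

definition weak_complicial :: "'a sset \<Rightarrow> bool" where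
  "weak_complicial X \<longleftrightarrow> stratified X
   \<and> (\<forall>n k. 1 \<le> n \<longrightarrow> k \<le> n \<longrightarrow> rlp (Lambda_k k n) (Delta_k k n) X)
   \<and> (\<forall>n k. 2 \<le> n \<longrightarrow> k \<le> n \<longrightarrow> rlp (Delta_k1 k n) (Delta_k2 k n) X)"

definition sprod :: "'a sset \<Rightarrow> 'b sset \<Rightarrow> ('a \<times> 'b) sset" where
  "sprod A B = \<lparr>Simp = (\<lambda>n. Simp A n \<times> Simp B n),
                Act = (\<lambda>n m \<alpha> p. (Act A n m \<alpha> (fst p), Act B n m \<alpha> (snd p))),
                Thin = (\<lambda>n. Thin A n \<times> Thin B n)\<rparr>"

text \<open>The stratified map Delta[n] -> X classifying an n-simplex a (Yoneda).\<close>
definition yon :: "'a sset \<Rightarrow> nat \<Rightarrow> 'a \<Rightarrow> nat \<Rightarrow> (nat \<Rightarrow> nat) \<Rightarrow> 'a" where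
  "yon X n a = (\<lambda>m \<beta>. Act X n m \<beta> a)"

definition bdry_simp :: "nat \<Rightarrow> nat \<Rightarrow> (nat \<Rightarrow> nat) set" where
  "bdry_simp n m = {\<alpha> \<in> dsimp n m. \<exists>i\<le>n. i \<notin> \<alpha> ` {..m}}"

definition const_simp :: "'a sset \<Rightarrow> 'a \<Rightarrow> nat \<Rightarrow> 'a" where
  "const_simp X x m = Act X 0 m (\<lambda>i. 0) x"

definition c0 :: "nat \<Rightarrow> nat \<Rightarrow> nat" where "c0 m = (\<lambda>i. 0)"
definition c1 :: "nat \<Rightarrow> nat \<Rightarrow> nat" where "c1 m = (\<lambda>i. if i \<le> m then 1 else 0)"

definition homotopic_rel_bdry :: "'a sset \<Rightarrow> nat \<Rightarrow> 'a \<Rightarrow> 'a \<Rightarrow> bool" where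
  "homotopic_rel_bdry X n a b \<longleftrightarrow>
     (\<forall>m \<beta>. \<beta> \<in> bdry_simp n m \<longrightarrow> Act X n m \<beta> a = Act X n m \<beta> b) \<and>
     (\<exists>H. smap (sprod (Delta n) (Delta_t 1)) X H
        \<and> (\<forall>m \<gamma>. \<gamma> \<in> dsimp n m \<longrightarrow> H m (\<gamma>, c0 m) = Act X n m \<gamma> a \<and> H m (\<gamma>, c1 m) = Act X n m \<gamma> b)
        \<and> (\<forall>m \<gamma> \<delta>. \<gamma> \<in> bdry_simp n m \<longrightarrow> \<delta> \<in> dsimp 1 m \<longrightarrow> H m (\<gamma>, \<delta>) = Act X n m \<gamma> a))"

definition sphere_simps :: "'a sset \<Rightarrow> 'a \<Rightarrow> nat \<Rightarrow> 'a set" where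
  "sphere_simps X x n = {a \<in> Simp X n. \<forall>m \<beta>. \<beta> \<in> bdry_simp n m \<longrightarrow> Act X n m \<beta> a = const_simp X x m}"

definition hrel :: "'a sset \<Rightarrow> 'a \<Rightarrow> nat \<Rightarrow> 'a \<Rightarrow> 'a \<Rightarrow> bool" where
  "hrel X x n a b \<longleftrightarrow> a \<in> sphere_simps X x n \<and> b \<in> sphere_simps X x n \<and> homotopic_rel_bdry X n a b"

text \<open>Homotopy class (w.r.t. the equivalence relation generated by \<sim>, which coincides
  with \<sim> whenever \<sim> is already an equivalence relation).\<close>
definition hclass :: "'a sset \<Rightarrow> 'a \<Rightarrow> nat \<Rightarrow> 'a \<Rightarrow> 'a set" where
  "hclass X x n a = {b \<in> sphere_simps X x n. equivclp (hrel X x n) a b}"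

definition face_map :: "nat \<Rightarrow> nat \<Rightarrow> nat" where
  "face_map i = (\<lambda>j. if j < i then j else j + 1)"

definition face :: "'a sset \<Rightarrow> nat \<Rightarrow> nat \<Rightarrow> 'a \<Rightarrow> 'a" where
  "face X n i t = Act X (Suc n) n (face_map i) t"

definition mult_filler :: "'a sset \<Rightarrow> 'a \<Rightarrow> nat \<Rightarrow> 'a \<Rightarrow> 'a \<Rightarrow> 'a \<Rightarrow> bool" where
  "mult_filler X x n t a b \<longleftrightarrow> t \<in> Simp X (Suc n)
     \<and> smap (Delta_k n (Suc n)) X (yon X (Suc n) t)
     \<and> face X n (n - 1) t = a \<and> face X n (Suc n) t = b
     \<and> (\<forall>i\<le>Suc n. i \<notin> {n - 1, n, Suc n} \<longrightarrow> face X n i t = const_simp X x n)"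

definition tau :: "'a sset \<Rightarrow> 'a \<Rightarrow> nat \<Rightarrow> 'a set monoid" where
  "tau X x n = \<lparr>carrier = hclass X x n ` sphere_simps X x n,
     mult = (\<lambda>A B. SOME C. \<exists>a\<in>A. \<exists>b\<in>B. \<exists>t. mult_filler X x n t a b \<and> C = hclass X x n (face X n n t)),
     one = hclass X x n (const_simp X x n)\<rparr>"

end

theory Submission
  imports Defs
begin

lemma ss_simp: "simplicial_set X \<Longrightarrow> mono_map m k \<alpha> \<Longrightarrow> y \<in> Simp X k \<Longrightarrow> Act X k m \<alpha> y \<in> Simp X m"
  unfolding simplicial_set_def by blast
lemma ss_id: "simplicial_set X \<Longrightarrow> y \<in> Simp X k \<Longrightarrow> Act X k k (\<lambda>i. i) y = y"
  unfolding simplicial_set_def by blast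
lemma ss_comp: "simplicial_set X \<Longrightarrow> mono_map m k \<alpha> \<Longrightarrow> mono_map p m \<beta> \<Longrightarrow> y \<in> Simp X k \<Longrightarrow>
   Act X m p \<beta> (Act X k m \<alpha> y) = Act X k p (\<alpha> \<circ> \<beta>) y"
  unfolding simplicial_set_def by blast
lemma ss_cong: "simplicial_set X \<Longrightarrow> mono_map m k \<alpha> \<Longrightarrow> (\<And>i. i \<le> m \<Longrightarrow> \<alpha> i = \<beta> i) \<Longrightarrow> y \<in> Simp X k \<Longrightarrow>
   Act X k m \<alpha> y = Act X k m \<beta> y"
  unfolding simplicial_set_def by blast

lemma ss_id': "simplicial_set X \<Longrightarrow> y \<in> Simp X k \<Longrightarrow> (\<And>i. i \<le> k \<Longrightarrow> \<alpha> i = i) \<Longrightarrow> Act X k k \<alpha> y = y"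
proof -
  assume a: "simplicial_set X" "y \<in> Simp X k" "\<And>i. i \<le> k \<Longrightarrow> \<alpha> i = i"
  have m: "mono_map k k (\<lambda>i. i)" by (simp add: mono_map_def)
  have "Act X k k (\<lambda>i. i) y = Act X k k \<alpha> y"
    by (rule ss_cong[OF a(1) m]) (use a in auto)
  thus ?thesis using ss_id[OF a(1,2)] by simp
qed

lemma mono_comp: "mono_map m k \<alpha> \<Longrightarrow> mono_map p m \<beta> \<Longrightarrow> mono_map p k (\<alpha> \<circ> \<beta>)"
  unfolding mono_map_def by auto

lemma mono_face: "mono_map M (Suc M) (face_map i)"
  unfolding mono_map_def face_map_def by auto

definition rem :: "nat \<Rightarrow> (nat \<Rightarrow> nat) \<Rightarrow> nat \<Rightarrow> nat" where
  "rem v \<alpha> = (\<lambda>i. if \<alpha> i < v then \<alpha> i else \<alpha> i - 1)"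

lemma mono_rem: "mono_map p (Suc M) \<alpha> \<Longrightarrow> v \<le> Suc M \<Longrightarrow> v \<notin> \<alpha> ` {..p} \<Longrightarrow> mono_map p M (rem v \<alpha>)"
proof -
  assume m: "mono_map p (Suc M) \<alpha>" and v: "v \<le> Suc M" "v \<notin> \<alpha> ` {..p}"
  have ne: "\<And>i. i \<le> p \<Longrightarrow> \<alpha> i \<noteq> v" using v by auto
  have b: "\<And>i. i \<le> p \<Longrightarrow> \<alpha> i \<le> Suc M" using m unfolding mono_map_def by auto
  have mo: "\<And>i j. i \<le> j \<Longrightarrow> j \<le> p \<Longrightarrow> \<alpha> i \<le> \<alpha> j" using m unfolding mono_map_def by auto
  show ?thesis unfolding mono_map_def rem_def
  proof (intro conjI allI impI)
    fix i assume "i \<le> p"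
    with b[of i] ne[of i] v(1) show "(if \<alpha> i < v then \<alpha> i else \<alpha> i - 1) \<le> M" by auto
  next
    fix i j assume "i \<le> j" "j \<le> p"
    with mo[of i j] ne[of i] ne[of j] show "(if \<alpha> i < v then \<alpha> i else \<alpha> i - 1) \<le> (if \<alpha> j < v then \<alpha> j else \<alpha> j - 1)"
      by auto
  qed
qed

lemma face_rem: "v \<notin> \<alpha> ` {..p} \<Longrightarrow> i \<le> p \<Longrightarrow> face_map v (rem v \<alpha> i) = \<alpha> i"
proof -
  assume a: "v \<notin> \<alpha> ` {..p}" "i \<le> p"
  hence "\<alpha> i \<noteq> v" by auto
  thus ?thesis unfolding face_map_def rem_def by auto
qed

lemma img_rem: "v \<notin> \<alpha> ` {..p} \<Longrightarrow> \<alpha> ` {..p} = face_map v ` (rem v \<alpha> ` {..p})"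
  using face_rem by (auto simp: image_image)

lemma inj_face: "inj (face_map v)"
  unfolding face_map_def inj_def by auto

lemma card_rem: "v \<notin> \<alpha> ` {..p} \<Longrightarrow> card (rem v \<alpha> ` {..p}) = card (\<alpha> ` {..p})"
  using img_rem[of v \<alpha> p] card_image[OF inj_on_subset[OF inj_face subset_UNIV]] by metis

lemma act_factor:
  assumes ss: "simplicial_set X" and m: "mono_map p (Suc M) \<alpha>" and v: "v \<le> Suc M" "v \<notin> \<alpha> ` {..p}"
    and y: "y \<in> Simp X (Suc M)"
  shows "Act X (Suc M) p \<alpha> y = Act X M p (rem v \<alpha>) (face X M v y)"
proof -
  have "Act X M p (rem v \<alpha>) (face X M v y) = Act X (Suc M) p (face_map v \<circ> rem v \<alpha>) y"
    unfolding face_def by (rule ss_comp[OF ss mono_face mono_rem[OF m v] y])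
  also have "\<dots> = Act X (Suc M) p \<alpha> y"
    by (rule ss_cong[OF ss mono_comp[OF mono_face mono_rem[OF m v]] _ y]) (simp add: face_rem[OF v(2)])
  finally show ?thesis by simp
qed

lemma face_face:
  assumes ss: "simplicial_set X" and ij: "i < j" and z: "z \<in> Simp X (Suc (Suc L))"
  shows "face X L i (face X (Suc L) j z) = face X L (j - 1) (face X (Suc L) i z)"
proof -
  have "face_map j \<circ> face_map i = face_map i \<circ> face_map (j - 1)"
    using ij unfolding face_map_def by (auto simp: fun_eq_iff)
  thus ?thesis unfolding face_def
    by (simp add: ss_comp[OF ss mono_face mono_face z])
qed

locale WC =
  fixes X :: "'a sset" and x :: 'a and n :: nat
  assumes n1: "1 \<le> n" and wc: "weak_complicial X"
    and thinhi: "\<forall>k\<ge>n. Simp X k \<subseteq> Thin X k" and x0: "x \<in> Simp X 0"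
begin

lemma strat: "stratified X" using wc unfolding weak_complicial_def by simp
lemma ss: "simplicial_set X" using strat unfolding stratified_def by simp

abbreviation cst where "cst p \<equiv> const_simp X x p"

lemma mono0: "mono_map p 0 (\<lambda>i. 0)" by (simp add: mono_map_def)

lemma cst_simp: "cst p \<in> Simp X p"
  unfolding const_simp_def by (rule ss_simp[OF ss mono0 x0])

lemma act_cst: "mono_map q p \<beta> \<Longrightarrow> Act X p q \<beta> (cst p) = cst q"
  unfolding const_simp_def by (simp add: ss_comp[OF ss mono0 _ x0] comp_def)

lemma face_cst: "face X M i (cst (Suc M)) = cst M"
  unfolding face_def by (rule act_cst[OF mono_face])

lemma cst_thin: "1 \<le> p \<Longrightarrow> cst p \<in> Thin X p"
proof -
  assume p: "1 \<le> p"
  have "\<not> inj_on (\<lambda>i::nat. 0::nat) {..p}"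
    using p unfolding inj_on_def by (metis atMost_iff le0 one_neq_zero)
  hence "cst p \<in> degenerate X p" unfolding const_simp_def degenerate_def
    using mono0 x0 by blast
  thus ?thesis using strat unfolding stratified_def by blast
qed

lemma thin_big: "n \<le> p \<Longrightarrow> y \<in> Simp X p \<Longrightarrow> y \<in> Thin X p"
  using thinhi by blast

definition good :: "nat \<Rightarrow> 'a \<Rightarrow> bool" where
  "good N t \<longleftrightarrow> t \<in> Simp X N \<and> (\<forall>p \<alpha>. mono_map p N \<alpha> \<longrightarrow> card (\<alpha> ` {..p}) \<le> n \<longrightarrow> Act X N p \<alpha> t = cst p)"

lemma good_simp: "good N t \<Longrightarrow> t \<in> Simp X N" unfolding good_def by simp

lemma good_use: "good N t \<Longrightarrow> mono_map p N \<alpha> \<Longrightarrow> card (\<alpha> ` {..p}) \<le> n \<Longrightarrow> Act X N p \<alpha> t = cst p"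
  unfolding good_def by simp

lemma good_cst: "good N (cst N)"
  unfolding good_def using cst_simp act_cst by simp

lemma good_act:
  assumes g: "good N t" and m: "mono_map M N \<alpha>"
  shows "good M (Act X N M \<alpha> t)"
  unfolding good_def
proof (intro conjI allI impI)
  show "Act X N M \<alpha> t \<in> Simp X M" using ss_simp[OF ss m good_simp[OF g]] .
next
  fix p \<beta> assume b: "mono_map p M \<beta>" and c: "card (\<beta> ` {..p}) \<le> n"
  have "card ((\<alpha> \<circ> \<beta>) ` {..p}) \<le> card (\<beta> ` {..p})"
    by (metis card_image_le finite_atMost finite_imageI image_comp)
  hence "card ((\<alpha> \<circ> \<beta>) ` {..p}) \<le> n" using c by simp
  thus "Act X M p \<beta> (Act X N M \<alpha> t) = cst p"
    using ss_comp[OF ss m b good_simp[OF g]] good_use[OF g mono_comp[OF m b]] by simp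
qed

lemma good_face: "good (Suc M) t \<Longrightarrow> good M (face X M i t)"
  unfolding face_def by (rule good_act[OF _ mono_face])

lemma miss_vertex:
  fixes \<alpha> :: "nat \<Rightarrow> nat" and p :: nat
  assumes c: "card (\<alpha> ` {..p}) \<le> n" and N: "n \<le> N" and "n < N \<or> k > N"
  shows "\<exists>v\<le>N. v \<noteq> k \<and> v \<notin> \<alpha> ` {..p}"
proof (rule ccontr)
  assume "\<not> ?thesis"
  hence sub: "{..N} - {k} \<subseteq> \<alpha> ` {..p}" by auto
  have "card ({..N} - {k}) \<le> card (\<alpha> ` {..p})" by (rule card_mono[OF _ sub]) (rule finite_imageI, rule finite_atMost)
  moreover have "card ({..N} - {k}) = (if k \<le> N then N else Suc N)" by auto
  ultimately show False using c assms by (auto split: if_splits)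
qed

lemma good_from_faces:
  assumes t: "t \<in> Simp X (Suc M)" and nM: "n \<le> Suc M"
    and f: "\<And>v. v \<le> Suc M \<Longrightarrow> good M (face X M v t)"
  shows "good (Suc M) t"
  unfolding good_def
proof (intro conjI allI impI t)
  fix p \<alpha> assume m: "mono_map p (Suc M) \<alpha>" and c: "card (\<alpha> ` {..p}) \<le> n"
  obtain v where v: "v \<le> Suc M" "v \<notin> \<alpha> ` {..p}"
    using miss_vertex[OF c nM, of "Suc (Suc M)"] by force
  have "Act X (Suc M) p \<alpha> t = Act X M p (rem v \<alpha>) (face X M v t)"
    by (rule act_factor[OF ss m v t])
  also have "\<dots> = cst p"
    by (rule good_use[OF f[OF v(1)] mono_rem[OF m v]]) (simp add: card_rem[OF v(2)] c)
  finally show "Act X (Suc M) p \<alpha> t = cst p" .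
qed

lemma good_small: "good N y \<Longrightarrow> N < n \<Longrightarrow> y = cst N"
proof -
  assume g: "good N y" and N: "N < n"
  have m: "mono_map N N (\<lambda>i. i)" by (simp add: mono_map_def)
  have "card ((\<lambda>i. i) ` {..N}) \<le> n" using N by simp
  from good_use[OF g m this] ss_id[OF ss good_simp[OF g]] show ?thesis by simp
qed

lemma card_miss: "mono_map p N \<alpha> \<Longrightarrow> v \<le> N \<Longrightarrow> v \<notin> \<alpha> ` {..p} \<Longrightarrow> card (\<alpha> ` {..p}) \<le> N"
proof -
  assume m: "mono_map p N \<alpha>" and v: "v \<le> N" "v \<notin> \<alpha> ` {..p}"
  have "\<alpha> ` {..p} \<subseteq> {..N} - {v}" using m v unfolding mono_map_def by auto
  hence "card (\<alpha> ` {..p}) \<le> card ({..N} - {v})" by (intro card_mono) auto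
  thus ?thesis using v by simp
qed

lemma good_miss: "good n y \<Longrightarrow> mono_map p n \<alpha> \<Longrightarrow> v \<le> n \<Longrightarrow> v \<notin> \<alpha> ` {..p} \<Longrightarrow> Act X n p \<alpha> y = cst p"
  using good_use card_miss by blast

lemma good_face_cst: "good n y \<Longrightarrow> M = n - 1 \<Longrightarrow> face X M i y = cst M"
proof -
  assume g: "good n y" and M: "M = n - 1"
  have "good M (face X M i y)" using good_face[of M y i] g M n1 by simp
  thus ?thesis using good_small M n1 by simp
qed

lemma sphere_good: "y \<in> sphere_simps X x n \<longleftrightarrow> good n y"
proof
  assume y: "y \<in> sphere_simps X x n"
  show "good n y" unfolding good_def
  proof (intro conjI allI impI)
    show "y \<in> Simp X n" using y unfolding sphere_simps_def by simp
  next
    fix p \<alpha> assume m: "mono_map p n \<alpha>" and c: "card (\<alpha> ` {..p}) \<le> n"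
    obtain v where v: "v \<le> n" "v \<notin> \<alpha> ` {..p}" using miss_vertex[OF c order_refl, of "Suc n"] by force
    define \<beta> where "\<beta> = (\<lambda>i. if i \<le> p then \<alpha> i else 0)"
    have "\<beta> \<in> bdry_simp n p" unfolding bdry_simp_def dsimp_def \<beta>_def
      using m v unfolding mono_map_def by auto
    hence "Act X n p \<beta> y = cst p" using y unfolding sphere_simps_def by auto
    moreover have "Act X n p \<alpha> y = Act X n p \<beta> y"
      by (rule ss_cong[OF ss m]) (use y in \<open>auto simp: \<beta>_def sphere_simps_def\<close>)
    ultimately show "Act X n p \<alpha> y = cst p" by simp
  qed
next
  assume g: "good n y"
  show "y \<in> sphere_simps X x n" unfolding sphere_simps_def
  proof (intro CollectI conjI allI impI good_simp[OF g])
    fix p \<beta> assume b: "\<beta> \<in> bdry_simp n p"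
    then obtain v where "v \<le> n" "v \<notin> \<beta> ` {..p}" "mono_map p n \<beta>"
      unfolding bdry_simp_def dsimp_def by auto
    thus "Act X n p \<beta> y = cst p" using good_miss[OF g] by blast
  qed
qed

end

context WC
begin

lemma nbhd_two: "k \<le> N \<Longrightarrow> 1 \<le> N \<Longrightarrow> \<exists>a b. a \<noteq> b \<and> a \<in> nbhd k N \<and> b \<in> nbhd k N"
proof -
  assume k: "k \<le> N" and N: "1 \<le> N"
  show ?thesis
  proof (cases "k < N")
    case True
    hence "k \<in> nbhd k N" "Suc k \<in> nbhd k N" using k unfolding nbhd_def by auto
    thus ?thesis by (metis n_not_Suc_n)
  next
    case False
    hence "k \<in> nbhd k N" "k - 1 \<in> nbhd k N" using k N unfolding nbhd_def by auto
    moreover have "k \<noteq> k - 1" using False N by auto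
    ultimately show ?thesis by blast
  qed
qed

lemma thin_k_0: "k \<le> N \<Longrightarrow> 1 \<le> N \<Longrightarrow> thin_k k N 0 = {}"
proof -
  assume k: "k \<le> N" and N: "1 \<le> N"
  obtain a b where ab: "a \<noteq> b" "a \<in> nbhd k N" "b \<in> nbhd k N" using nbhd_two[OF k N] by blast
  have "\<alpha> \<notin> thin_k k N 0" for \<alpha>
  proof
    assume "\<alpha> \<in> thin_k k N 0"
    hence "\<not> inj_on \<alpha> {..0} \<or> nbhd k N \<subseteq> \<alpha> ` {..0}" unfolding thin_k_def ddegen_def by auto
    moreover have "inj_on \<alpha> {..0::nat}" by (auto simp: inj_on_def)
    moreover have "\<alpha> ` {..0::nat} = {\<alpha> 0}" by auto
    ultimately show False using ab by auto
  qed
  thus ?thesis by auto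
qed

lemma dact_mono: "mono_map p N \<alpha> \<Longrightarrow> mono_map q p \<beta> \<Longrightarrow> mono_map q N (dact p q \<beta> \<alpha>)"
  unfolding mono_map_def dact_def by auto

lemma dact_dsimp: "\<alpha> \<in> dsimp N p \<Longrightarrow> mono_map q p \<beta> \<Longrightarrow> dact p q \<beta> \<alpha> \<in> dsimp N q"
  unfolding dsimp_def using dact_mono by (auto simp: dact_def)

lemma did_dsimp: "did N \<in> dsimp N N"
  unfolding dsimp_def did_def mono_map_def by auto

lemma dact_did: "\<alpha> \<in> dsimp N p \<Longrightarrow> dact N p \<alpha> (did N) = \<alpha>"
  unfolding dsimp_def dact_def did_def mono_map_def by (auto simp: fun_eq_iff)

lemma indep_lt:
  assumes y: "\<forall>c \<le> Suc (Suc L). c \<noteq> k \<longrightarrow> good (Suc L) (y c)"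
    and compat: "\<forall>i j. i < j \<longrightarrow> j \<le> Suc (Suc L) \<longrightarrow> i \<noteq> k \<longrightarrow> j \<noteq> k \<longrightarrow> face X L i (y j) = face X L (j - 1) (y i)"
    and m: "mono_map p (Suc (Suc L)) \<alpha>"
    and vw: "v < w" "w \<le> Suc (Suc L)" "v \<noteq> k" "w \<noteq> k" "v \<notin> \<alpha> ` {..p}" "w \<notin> \<alpha> ` {..p}"
  shows "Act X (Suc L) p (rem v \<alpha>) (y v) = Act X (Suc L) p (rem w \<alpha>) (y w)"
proof -
  have yv: "y v \<in> Simp X (Suc L)" using y vw good_simp by auto
  have yw: "y w \<in> Simp X (Suc L)" using y vw good_simp by auto
  have mv: "mono_map p (Suc L) (rem v \<alpha>)" using mono_rem[OF m] vw by auto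
  have mw: "mono_map p (Suc L) (rem w \<alpha>)" using mono_rem[OF m] vw by auto
  have ne: "\<And>i. i \<le> p \<Longrightarrow> \<alpha> i \<noteq> v \<and> \<alpha> i \<noteq> w" using vw by auto
  have m1: "w - 1 \<notin> rem v \<alpha> ` {..p}"
  proof
    assume "w - 1 \<in> rem v \<alpha> ` {..p}"
    then obtain i where "i \<le> p" "w - 1 = rem v \<alpha> i" by auto
    thus False using ne[of i] vw(1) unfolding rem_def by (auto split: if_splits)
  qed
  have m2: "v \<notin> rem w \<alpha> ` {..p}"
  proof
    assume "v \<in> rem w \<alpha> ` {..p}"
    then obtain i where "i \<le> p" "v = rem w \<alpha> i" by auto
    thus False using ne[of i] vw(1) unfolding rem_def by (auto split: if_splits)
  qed
  have "Act X (Suc L) p (rem v \<alpha>) (y v) = Act X L p (rem (w - 1) (rem v \<alpha>)) (face X L (w - 1) (y v))"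
    by (rule act_factor[OF ss mv _ m1 yv]) (use vw in auto)
  also have "\<dots> = Act X L p (rem v (rem w \<alpha>)) (face X L (w - 1) (y v))"
  proof (rule ss_cong[OF ss])
    show "mono_map p L (rem (w - 1) (rem v \<alpha>))" by (rule mono_rem[OF mv _ m1]) (use vw in auto)
    show "face X L (w - 1) (y v) \<in> Simp X L" unfolding face_def by (rule ss_simp[OF ss mono_face yv])
    fix i assume "i \<le> p"
    thus "rem (w - 1) (rem v \<alpha>) i = rem v (rem w \<alpha>) i" using ne[of i] vw(1) unfolding rem_def by auto
  qed
  also have "\<dots> = Act X L p (rem v (rem w \<alpha>)) (face X L v (y w))"
    using compat vw by auto
  also have "\<dots> = Act X (Suc L) p (rem w \<alpha>) (y w)"
    by (rule act_factor[OF ss mw _ m2 yw, symmetric]) (use vw in auto)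
  finally show ?thesis .
qed

lemma horn_fill:
  assumes N: "n \<le> Suc L" and k: "k \<le> Suc (Suc L)"
    and y: "\<forall>c \<le> Suc (Suc L). c \<noteq> k \<longrightarrow> good (Suc L) (y c)"
    and compat: "\<forall>i j. i < j \<longrightarrow> j \<le> Suc (Suc L) \<longrightarrow> i \<noteq> k \<longrightarrow> j \<noteq> k \<longrightarrow> face X L i (y j) = face X L (j - 1) (y i)"
  shows "\<exists>z. good (Suc (Suc L)) z \<and> (\<forall>c \<le> Suc (Suc L). c \<noteq> k \<longrightarrow> face X (Suc L) c z = y c)"
proof -
  define NN where "NN = Suc (Suc L)"
  have indep: "Act X (Suc L) p (rem v \<alpha>) (y v) = Act X (Suc L) p (rem w \<alpha>) (y w)"
    if m: "mono_map p NN \<alpha>" and vw: "v \<le> NN" "w \<le> NN" "v \<noteq> k" "w \<noteq> k" "v \<notin> \<alpha> ` {..p}" "w \<notin> \<alpha> ` {..p}"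
    for p \<alpha> v w
  proof -
    consider "v < w" | "v = w" | "w < v" by arith
    thus ?thesis
    proof cases
      case 1 thus ?thesis using indep_lt[OF y compat] m vw unfolding NN_def by blast
    next
      case 2 thus ?thesis by simp
    next
      case 3 thus ?thesis using indep_lt[OF y compat] m vw unfolding NN_def by metis
    qed
  qed
  define sel where "sel p \<alpha> = (SOME v. v \<le> NN \<and> v \<noteq> k \<and> v \<notin> \<alpha> ` {..p})" for p and \<alpha> :: "nat \<Rightarrow> nat"
  define f where "f p \<alpha> = Act X (Suc L) p (rem (sel p \<alpha>) \<alpha>) (y (sel p \<alpha>))" for p \<alpha>
  have f_eq: "f p \<alpha> = Act X (Suc L) p (rem v \<alpha>) (y v)"
    if m: "mono_map p NN \<alpha>" and v: "v \<le> NN" "v \<noteq> k" "v \<notin> \<alpha> ` {..p}" for p \<alpha> v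
  proof -
    have "sel p \<alpha> \<le> NN \<and> sel p \<alpha> \<noteq> k \<and> sel p \<alpha> \<notin> \<alpha> ` {..p}"
      unfolding sel_def by (rule someI[of _ v]) (use v in auto)
    thus ?thesis unfolding f_def using indep[OF m] v by blast
  qed
  have horn_miss: "\<exists>v. v \<le> NN \<and> v \<noteq> k \<and> v \<notin> \<alpha> ` {..p} \<and> mono_map p NN \<alpha>"
    if "\<alpha> \<in> horn_simp k NN p" for p \<alpha>
    using that unfolding horn_simp_def dsimp_def by auto
  have yS: "y c \<in> Simp X (Suc L)" if "c \<le> NN" "c \<noteq> k" for c
    using y that good_simp unfolding NN_def by auto
  have fsm: "smap (Lambda_k k NN) X f"
    unfolding smap_def Lambda_k_def dstd_def
  proof (simp only: sset.simps, intro conjI allI impI)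
    fix p \<alpha> assume a: "\<alpha> \<in> horn_simp k NN p"
    then obtain v where v: "v \<le> NN" "v \<noteq> k" "v \<notin> \<alpha> ` {..p}" "mono_map p NN \<alpha>" using horn_miss by blast
    have mr: "mono_map p (Suc L) (rem v \<alpha>)" using mono_rem[of p "Suc L" \<alpha> v] v unfolding NN_def by auto
    show "f p \<alpha> \<in> Simp X p" unfolding f_eq[OF v(4) v(1-3)] by (rule ss_simp[OF ss mr yS[OF v(1,2)]])
  next
    fix p \<alpha> assume a: "\<alpha> \<in> horn_simp k NN p \<inter> thin_k k NN p"
    then obtain v where v: "v \<le> NN" "v \<noteq> k" "v \<notin> \<alpha> ` {..p}" "mono_map p NN \<alpha>" using horn_miss by blast
    have mr: "mono_map p (Suc L) (rem v \<alpha>)" using mono_rem[of p "Suc L" \<alpha> v] v unfolding NN_def by auto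
    have fS: "f p \<alpha> \<in> Simp X p" unfolding f_eq[OF v(4) v(1-3)] by (rule ss_simp[OF ss mr yS[OF v(1,2)]])
    show "f p \<alpha> \<in> Thin X p"
    proof (cases "n \<le> p")
      case True thus ?thesis using thin_big fS by blast
    next
      case False
      have t0: "thin_k k NN 0 = {}" by (rule thin_k_0) (use k in \<open>auto simp: NN_def\<close>)
      have p0: "p \<noteq> 0"
      proof
        assume "p = 0" thus False using a t0 by auto
      qed
      have "card (rem v \<alpha> ` {..p}) \<le> card {..p}" by (rule card_image_le) simp
      hence c: "card (rem v \<alpha> ` {..p}) \<le> n" using False by simp
      have "f p \<alpha> = cst p" unfolding f_eq[OF v(4) v(1-3)]
        by (rule good_use[OF _ mr c]) (use y v in \<open>auto simp: NN_def\<close>)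
      thus ?thesis using cst_thin p0 by (simp add: Suc_le_eq)
    qed
  next
    fix p q \<beta> \<alpha> assume b: "mono_map q p \<beta>" and a: "\<alpha> \<in> horn_simp k NN p"
    then obtain v where v: "v \<le> NN" "v \<noteq> k" "v \<notin> \<alpha> ` {..p}" "mono_map p NN \<alpha>" using horn_miss by blast
    have mr: "mono_map p (Suc L) (rem v \<alpha>)" using mono_rem[of p "Suc L" \<alpha> v] v unfolding NN_def by auto
    have md: "mono_map q NN (dact p q \<beta> \<alpha>)" by (rule dact_mono[OF v(4) b])
    have vd: "v \<notin> dact p q \<beta> \<alpha> ` {..q}"
      using v(3) b unfolding dact_def mono_map_def by auto
    have "f q (dact p q \<beta> \<alpha>) = Act X (Suc L) q (rem v (dact p q \<beta> \<alpha>)) (y v)"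
      by (rule f_eq[OF md v(1,2) vd])
    also have "\<dots> = Act X (Suc L) q (rem v \<alpha> \<circ> \<beta>) (y v)"
    proof (rule ss_cong[OF ss _ _ yS[OF v(1,2)]])
      show "mono_map q (Suc L) (rem v (dact p q \<beta> \<alpha>))"
        using mono_rem[of q "Suc L" "dact p q \<beta> \<alpha>" v] md vd v unfolding NN_def by auto
      fix i assume "i \<le> q" thus "rem v (dact p q \<beta> \<alpha>) i = (rem v \<alpha> \<circ> \<beta>) i"
        unfolding rem_def dact_def by simp
    qed
    also have "\<dots> = Act X p q \<beta> (f p \<alpha>)"
      unfolding f_eq[OF v(4) v(1-3)] by (rule ss_comp[OF ss mr b yS[OF v(1,2)], symmetric])
    finally show "f q (dact p q \<beta> \<alpha>) = Act X p q \<beta> (f p \<alpha>)" .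
  qed
  have "rlp (Lambda_k k NN) (Delta_k k NN) X"
    using wc k unfolding weak_complicial_def NN_def by auto
  then obtain g where gsm: "smap (Delta_k k NN) X g"
    and gf: "\<And>p \<alpha>. \<alpha> \<in> horn_simp k NN p \<Longrightarrow> g p \<alpha> = f p \<alpha>"
    using fsm unfolding rlp_def Lambda_k_def dstd_def by auto
  define z where "z = g NN (did NN)"
  have gnat: "g p \<alpha> = Act X NN p \<alpha> z" if a: "\<alpha> \<in> dsimp NN p" for p \<alpha>
  proof -
    have "mono_map p NN \<alpha>" using a unfolding dsimp_def by simp
    hence "g p (dact NN p \<alpha> (did NN)) = Act X NN p \<alpha> (g NN (did NN))"
      using gsm did_dsimp unfolding smap_def Delta_k_def dstd_def by auto
    thus ?thesis using dact_did[OF a] z_def by simp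
  qed
  have zS: "z \<in> Simp X NN" using gsm did_dsimp unfolding z_def smap_def Delta_k_def dstd_def by auto
  define nm where "nm p \<alpha> = (\<lambda>i. if i \<le> p then \<alpha> i else (0::nat))" for p and \<alpha> :: "nat \<Rightarrow> nat"
  have nm_ds: "nm p \<alpha> \<in> dsimp NN p" if "mono_map p NN \<alpha>" for p \<alpha>
    using that unfolding nm_def dsimp_def mono_map_def by auto
  have nm_act: "Act X NN p \<alpha> z = Act X NN p (nm p \<alpha>) z" if "mono_map p NN \<alpha>" for p \<alpha>
    by (rule ss_cong[OF ss that _ zS]) (simp add: nm_def)
  have nm_img: "nm p \<alpha> ` {..p} = \<alpha> ` {..p}" for p \<alpha> unfolding nm_def by auto
  have nm_mono: "mono_map p NN (nm p \<alpha>)" if "mono_map p NN \<alpha>" for p \<alpha>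
    using nm_ds[OF that] unfolding dsimp_def by simp
  have "good NN z" unfolding good_def
  proof (intro conjI allI impI zS)
    fix p \<alpha> assume m: "mono_map p NN \<alpha>" and c: "card (\<alpha> ` {..p}) \<le> n"
    obtain v where v: "v \<le> NN" "v \<noteq> k" "v \<notin> \<alpha> ` {..p}"
      using miss_vertex[OF c, of NN k] N unfolding NN_def by auto
    have hs: "nm p \<alpha> \<in> horn_simp k NN p" unfolding horn_simp_def using nm_ds[OF m] v nm_img by auto
    have mr: "mono_map p (Suc L) (rem v (nm p \<alpha>))"
      using mono_rem[of p "Suc L" "nm p \<alpha>" v] nm_mono[OF m] v nm_img unfolding NN_def by auto
    have "Act X NN p \<alpha> z = f p (nm p \<alpha>)" using nm_act[OF m] gnat[OF nm_ds[OF m]] gf[OF hs] by simp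
    also have "\<dots> = Act X (Suc L) p (rem v (nm p \<alpha>)) (y v)"
      by (rule f_eq[OF nm_mono[OF m] v(1,2)]) (use v nm_img in simp)
    also have "\<dots> = cst p"
      by (rule good_use[OF _ mr]) (use y v c card_rem[of v "nm p \<alpha>" p] nm_img in \<open>auto simp: NN_def\<close>)
    finally show "Act X NN p \<alpha> z = cst p" .
  qed
  moreover have "face X (Suc L) c z = y c" if c: "c \<le> NN" "c \<noteq> k" for c
  proof -
    have mf: "mono_map (Suc L) NN (face_map c)" unfolding NN_def by (rule mono_face)
    have cm: "c \<notin> nm (Suc L) (face_map c) ` {..Suc L}" unfolding nm_def face_map_def by auto
    have hs: "nm (Suc L) (face_map c) \<in> horn_simp k NN (Suc L)"
      unfolding horn_simp_def using nm_ds[OF mf] c cm by auto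
    have "face X (Suc L) c z = Act X NN (Suc L) (nm (Suc L) (face_map c)) z"
      unfolding face_def NN_def[symmetric] by (rule nm_act[OF mf])
    also have "\<dots> = f (Suc L) (nm (Suc L) (face_map c))"
      using gnat[OF nm_ds[OF mf]] gf[OF hs] by simp
    also have "\<dots> = Act X (Suc L) (Suc L) (rem c (nm (Suc L) (face_map c))) (y c)"
      by (rule f_eq[OF nm_mono[OF mf] c cm])
    also have "\<dots> = y c"
      by (rule ss_id'[OF ss yS[OF c]]) (auto simp: rem_def nm_def face_map_def)
    finally show ?thesis .
  qed
  ultimately show ?thesis unfolding NN_def by blast
qed

end

definition Vf :: "(nat \<Rightarrow> nat \<Rightarrow> 'a) \<Rightarrow> nat \<Rightarrow> nat \<Rightarrow> 'a" where
  "Vf e c i = (if i < c then e i c else e c (Suc i))"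

definition E6 :: "'a \<Rightarrow> 'a \<Rightarrow> 'a \<Rightarrow> 'a \<Rightarrow> 'a \<Rightarrow> 'a \<Rightarrow> nat \<Rightarrow> nat \<Rightarrow> 'a" where
  "E6 pA pB pC pD pE pF = (\<lambda>i j. if i = 0 then (if j = 1 then pA else if j = 2 then pB else pC)
      else if i = 1 then (if j = 2 then pD else pE) else pF)"

lemma le3: "(c::nat) \<le> 3 \<longleftrightarrow> c = 0 \<or> c = 1 \<or> c = 2 \<or> c = 3" by arith

context WC
begin

lemma horn_G:
  assumes N: "n \<le> Suc L" and k: "k \<le> Suc (Suc L)"
    and y: "\<forall>c \<le> Suc (Suc L). c \<noteq> k \<longrightarrow> good (Suc L) (y c) \<and>
              (\<forall>q \<le> Suc L. face X L q (y c) = (if q < c then F q c else F c (Suc q)))"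
  shows "\<exists>z. good (Suc (Suc L)) z \<and> (\<forall>c \<le> Suc (Suc L). c \<noteq> k \<longrightarrow> face X (Suc L) c z = y c)
     \<and> (\<forall>q \<le> Suc L. face X L q (face X (Suc L) k z) = (if q < k then F q k else F k (Suc q)))"
proof -
  have compat: "\<forall>i j. i < j \<longrightarrow> j \<le> Suc (Suc L) \<longrightarrow> i \<noteq> k \<longrightarrow> j \<noteq> k \<longrightarrow> face X L i (y j) = face X L (j - 1) (y i)"
  proof (intro allI impI)
    fix i j assume a: "i < j" "j \<le> Suc (Suc L)" "i \<noteq> k" "j \<noteq> k"
    have "face X L i (y j) = F i j" using y a by auto
    moreover have "face X L (j - 1) (y i) = F i j" using y[rule_format, of i] a by auto
    ultimately show "face X L i (y j) = face X L (j - 1) (y i)" by simp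
  qed
  obtain z where zg: "good (Suc (Suc L)) z" and zf: "\<forall>c \<le> Suc (Suc L). c \<noteq> k \<longrightarrow> face X (Suc L) c z = y c"
    using horn_fill[OF N k _ compat] y by blast
  have zS: "z \<in> Simp X (Suc (Suc L))" using good_simp[OF zg] .
  have "face X L q (face X (Suc L) k z) = (if q < k then F q k else F k (Suc q))" if q: "q \<le> Suc L" for q
  proof (cases "q < k")
    case True
    have "face X L q (face X (Suc L) k z) = face X L (k - 1) (face X (Suc L) q z)"
      by (rule face_face[OF ss True zS])
    also have "\<dots> = face X L (k - 1) (y q)" using zf True q by auto
    also have "\<dots> = F q k" using y[rule_format, of q] True q k by auto
    finally show ?thesis using True by simp
  next
    case False
    have "face X L k (face X (Suc L) (Suc q) z) = face X L (Suc q - 1) (face X (Suc L) k z)"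
      by (rule face_face[OF ss _ zS]) (use False in auto)
    hence "face X L q (face X (Suc L) k z) = face X L k (face X (Suc L) (Suc q) z)" by simp
    also have "\<dots> = face X L k (y (Suc q))" using zf False q by auto
    also have "\<dots> = F k (Suc q)" using y[rule_format, of "Suc q"] False q k by auto
    finally show ?thesis using False by simp
  qed
  thus ?thesis using zg zf by blast
qed

definition T :: "nat \<Rightarrow> 'a \<Rightarrow> 'a \<Rightarrow> 'a \<Rightarrow> 'a \<Rightarrow> bool" where
  "T p t u v w \<longleftrightarrow> good (Suc n) t \<and> (\<forall>q \<le> Suc n. face X n q t =
     (if q = p then u else if q = Suc p then v else if q = Suc (Suc p) then w else cst n))"

lemma T_G:
  assumes c: "c \<le> 3"
  shows "(if q = p then Vf e c 0 else if q = Suc p then Vf e c 1 else if q = Suc (Suc p) then Vf e c 2 else cst n)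
    = (if q < p + c then (if p \<le> q \<and> p + c \<le> p + 3 then e (q - p) c else cst n)
       else (if p \<le> p + c \<and> Suc q \<le> p + 3 then e c (Suc q - p) else cst n))"
  using c unfolding le3 Vf_def by (auto simp: numeral_eq_Suc)

lemma TET:
  assumes p: "Suc p \<le> n" and k: "k \<le> 3"
    and h: "\<forall>c \<le> 3. c \<noteq> k \<longrightarrow> (\<exists>t. T p t (Vf e c 0) (Vf e c 1) (Vf e c 2))"
  shows "\<exists>t. T p t (Vf e k 0) (Vf e k 1) (Vf e k 2)"
proof -
  from h obtain W where W: "\<And>c. c \<le> 3 \<Longrightarrow> c \<noteq> k \<Longrightarrow> T p (W c) (Vf e c 0) (Vf e c 1) (Vf e c 2)"
    by metis
  define F where "F i j = (if p \<le> i \<and> j \<le> p + 3 then e (i - p) (j - p) else cst n)" for i j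
  define y where "y c = (if p \<le> c \<and> c \<le> p + 3 then W (c - p) else cst (Suc n))" for c
  have yc: "good (Suc n) (y c) \<and> (\<forall>q \<le> Suc n. face X n q (y c) = (if q < c then F q c else F c (Suc q)))"
    if c: "c \<le> Suc (Suc n)" "c \<noteq> p + k" for c
  proof (cases "p \<le> c \<and> c \<le> p + 3")
    case True
    define c' where "c' = c - p"
    have c': "c = p + c'" "c' \<le> 3" "c' \<noteq> k" using True c unfolding c'_def by auto
    have yW: "y c = W c'" unfolding y_def c'_def using True by simp
    have TW: "T p (W c') (Vf e c' 0) (Vf e c' 1) (Vf e c' 2)" using W c' by simp
    show ?thesis unfolding yW
    proof (intro conjI allI impI)
      show "good (Suc n) (W c')" using TW unfolding T_def by simp
      fix q assume q: "q \<le> Suc n"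
      have "face X n q (W c') = (if q = p then Vf e c' 0 else if q = Suc p then Vf e c' 1 else if q = Suc (Suc p) then Vf e c' 2 else cst n)"
        using TW q unfolding T_def by simp
      also have "\<dots> = (if q < p + c' then (if p \<le> q \<and> p + c' \<le> p + 3 then e (q - p) c' else cst n)
       else (if p \<le> p + c' \<and> Suc q \<le> p + 3 then e c' (Suc q - p) else cst n))" by (rule T_G[OF c'(2)])
      also have "\<dots> = (if q < c then F q c else F c (Suc q))" unfolding F_def c'(1) by simp
      finally show "face X n q (W c') = (if q < c then F q c else F c (Suc q))" .
    qed
  next
    case False
    have yc: "y c = cst (Suc n)" using False unfolding y_def by auto
    show ?thesis unfolding yc
      using False by (auto simp: good_cst face_cst F_def)
  qed
  have pk: "p + k \<le> Suc (Suc n)" using p k by simp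
  obtain z where zg: "good (Suc (Suc n)) z"
    and zf: "\<forall>q \<le> Suc n. face X n q (face X (Suc n) (p + k) z) = (if q < p + k then F q (p + k) else F (p + k) (Suc q))"
    using horn_G[OF _ pk, of y F] yc by auto
  define w where "w = face X (Suc n) (p + k) z"
  have "T p w (Vf e k 0) (Vf e k 1) (Vf e k 2)" unfolding T_def
  proof (intro conjI allI impI)
    show "good (Suc n) w" unfolding w_def by (rule good_face[OF zg])
    fix q assume q: "q \<le> Suc n"
    have "face X n q w = (if q < p + k then F q (p + k) else F (p + k) (Suc q))" using zf q w_def by simp
    also have "\<dots> = (if q < p + k then (if p \<le> q \<and> p + k \<le> p + 3 then e (q - p) k else cst n)
       else (if p \<le> p + k \<and> Suc q \<le> p + 3 then e k (Suc q - p) else cst n))" unfolding F_def by simp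
    also have "\<dots> = (if q = p then Vf e k 0 else if q = Suc p then Vf e k 1 else if q = Suc (Suc p) then Vf e k 2 else cst n)"
      by (rule T_G[OF k, symmetric])
    finally show "face X n q w = (if q = p then Vf e k 0 else if q = Suc p then Vf e k 1 else if q = Suc (Suc p) then Vf e k 2 else cst n)" .
  qed
  thus ?thesis by blast
qed

lemma TET0:
  assumes "Suc p \<le> n" "\<exists>t. T p t pA pD pE" "\<exists>t. T p t pB pD pF" "\<exists>t. T p t pC pE pF"
  shows "\<exists>t. T p t pA pB pC"
  using TET[OF assms(1), of 0 "E6 pA pB pC pD pE pF"] assms(2-)
  unfolding le3 by (auto simp: Vf_def E6_def)

lemma TET1:
  assumes "Suc p \<le> n" "\<exists>t. T p t pA pB pC" "\<exists>t. T p t pB pD pF" "\<exists>t. T p t pC pE pF"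
  shows "\<exists>t. T p t pA pD pE"
  using TET[OF assms(1), of 1 "E6 pA pB pC pD pE pF"] assms(2-)
  unfolding le3 by (auto simp: Vf_def E6_def)

lemma TET2:
  assumes "Suc p \<le> n" "\<exists>t. T p t pA pB pC" "\<exists>t. T p t pA pD pE" "\<exists>t. T p t pC pE pF"
  shows "\<exists>t. T p t pB pD pF"
  using TET[OF assms(1), of 2 "E6 pA pB pC pD pE pF"] assms(2-)
  unfolding le3 by (auto simp: Vf_def E6_def)

lemma TET3:
  assumes "Suc p \<le> n" "\<exists>t. T p t pA pB pC" "\<exists>t. T p t pA pD pE" "\<exists>t. T p t pB pD pF"
  shows "\<exists>t. T p t pC pE pF"
  using TET[OF assms(1), of 3 "E6 pA pB pC pD pE pF"] assms(2-)
  unfolding le3 by (auto simp: Vf_def E6_def)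

end

context WC
begin

lemma degen:
  assumes u: "good n u" and j: "j \<le> n"
  shows "\<exists>t. good (Suc n) t \<and> (\<forall>q \<le> Suc n. face X n q t = (if q = j \<or> q = Suc j then u else cst n))"
proof -
  define \<sigma> where "\<sigma> = (\<lambda>i::nat. if i \<le> j then i else i - 1)"
  have m: "mono_map (Suc n) n \<sigma>" unfolding mono_map_def \<sigma>_def using j by auto
  define t where "t = Act X n (Suc n) \<sigma> u"
  have uS: "u \<in> Simp X n" using good_simp[OF u] .
  have "face X n q t = (if q = j \<or> q = Suc j then u else cst n)" if q: "q \<le> Suc n" for q
  proof -
    have fq: "face X n q t = Act X n n (\<sigma> \<circ> face_map q) u"
      unfolding face_def t_def by (rule ss_comp[OF ss m mono_face uS])
    have mc: "mono_map n n (\<sigma> \<circ> face_map q)" by (rule mono_comp[OF m mono_face])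
    show ?thesis
    proof (cases "q = j \<or> q = Suc j")
      case True
      have "Act X n n (\<sigma> \<circ> face_map q) u = u"
        by (rule ss_id'[OF ss uS]) (use True in \<open>auto simp: \<sigma>_def face_map_def\<close>)
      thus ?thesis using fq True by simp
    next
      case False
      define v where "v = (if q < j then q else q - 1)"
      have v1: "v \<le> n" using False q j unfolding v_def by auto
      have v2: "v \<notin> (\<sigma> \<circ> face_map q) ` {..n}"
      proof
        assume "v \<in> (\<sigma> \<circ> face_map q) ` {..n}"
        then obtain i where i: "i \<le> n" "v = \<sigma> (face_map q i)" by auto
        show False
        proof (cases "q < j")
          case True
          thus False using i unfolding v_def \<sigma>_def face_map_def by (simp split: if_splits)
        next
          case F2: False
          hence "Suc (Suc j) \<le> q" using False by simp
          thus False using i F2 unfolding v_def \<sigma>_def face_map_def by (simp split: if_splits)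
        qed
      qed
      note v = v1 v2
      show ?thesis using fq False good_miss[OF u mc v] by simp
    qed
  qed
  moreover have "good (Suc n) t" unfolding t_def by (rule good_act[OF u m])
  ultimately show ?thesis by blast
qed

lemma T_good: "T p t u v w \<Longrightarrow> good (Suc n) t" unfolding T_def by simp

lemma T_faces: assumes "T p t u v w" "Suc p \<le> n" shows "good n u" "good n v" "good n w"
proof -
  have g: "good (Suc n) t" using assms T_def by simp
  have "face X n p t = u" "face X n (Suc p) t = v" "face X n (Suc (Suc p)) t = w"
    using assms unfolding T_def by auto
  thus "good n u" "good n v" "good n w" using good_face[OF g] by metis+
qed

lemma degen_T1: "good n u \<Longrightarrow> Suc p \<le> n \<Longrightarrow> \<exists>t. T p t u u (cst n)"
proof -
  assume u: "good n u" and p: "Suc p \<le> n"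
  obtain t where t: "good (Suc n) t" "\<forall>q \<le> Suc n. face X n q t = (if q = p \<or> q = Suc p then u else cst n)"
    using degen[OF u, of p] p by (meson Suc_leD)
  have "T p t u u (cst n)" unfolding T_def using t by simp
  thus ?thesis by blast
qed

lemma degen_T2: "good n u \<Longrightarrow> Suc p \<le> n \<Longrightarrow> \<exists>t. T p t (cst n) u u"
proof -
  assume u: "good n u" and p: "Suc p \<le> n"
  obtain t where t: "good (Suc n) t" "\<forall>q \<le> Suc n. face X n q t = (if q = Suc p \<or> q = Suc (Suc p) then u else cst n)"
    using degen[OF u, of "Suc p"] p by blast
  have "T p t (cst n) u u" unfolding T_def using t by simp
  thus ?thesis by blast
qed

lemma T_cst: "Suc p \<le> n \<Longrightarrow> \<exists>t. T p t (cst n) (cst n) (cst n)"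
proof -
  have "T p (cst (Suc n)) (cst n) (cst n) (cst n)" unfolding T_def using good_cst[of "Suc n"] face_cst by simp
  thus ?thesis by blast
qed

lemma T_reindex: "T p t (cst n) v u \<longleftrightarrow> T (Suc p) t v u (cst n)"
proof -
  have "(if q = p then cst n else if q = Suc p then v else if q = Suc (Suc p) then u else cst n) =
        (if q = Suc p then v else if q = Suc (Suc p) then u else if q = Suc (Suc (Suc p)) then cst n else cst n)" for q
    by simp
  thus ?thesis unfolding T_def by simp
qed

definition E :: "'a \<Rightarrow> 'a \<Rightarrow> bool" where
  "E u v \<longleftrightarrow> (\<exists>t. T (n - 1) t (cst n) u v)"

lemma n1': "Suc (n - 1) = n" using n1 by simp
lemma n1'': "Suc (n - 1) \<le> n" using n1 by simp

end

context WC
begin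

lemma E_good: "E u v \<Longrightarrow> good n u \<and> good n v"
  unfolding E_def using T_faces[OF _ n1''] by blast

lemma E_refl: "good n u \<Longrightarrow> E u u"
  unfolding E_def using degen_T2[OF _ n1''] by blast

lemma E_euc: "E u v \<Longrightarrow> E u w \<Longrightarrow> E v w"
  unfolding E_def using TET3[OF n1'', where pA="cst n" and pB="cst n" and pC="cst n" and pD=u and pE=v and pF=w] T_cst[OF n1''] by blast

lemma E_sym: "E u v \<Longrightarrow> E v u"
  using E_euc E_refl E_good by blast

lemma E_trans: "E u v \<Longrightarrow> E v w \<Longrightarrow> E u w"
  using E_euc E_sym by blast

lemma shift: "Suc p \<le> n \<Longrightarrow> T p t u v (cst n) \<Longrightarrow> \<exists>t. T p t (cst n) v u"
proof -
  assume p: "Suc p \<le> n" and h: "T p t u v (cst n)"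
  have u: "good n u" using T_faces[OF h p] by simp
  show ?thesis
    using TET1[OF p, where pA="cst n" and pD=v and pE=u and pB=u and pF="cst n" and pC=u] degen_T1[OF u p] degen_T2[OF u p] h by blast
qed

lemma unshift: "Suc p \<le> n \<Longrightarrow> T p t (cst n) v u \<Longrightarrow> \<exists>t. T p t u v (cst n)"
proof -
  assume p: "Suc p \<le> n" and h: "T p t (cst n) v u"
  have u: "good n u" using T_faces[OF h p] by simp
  show ?thesis
    using TET2[OF p, where pA="cst n" and pD=v and pE=u and pB=u and pF="cst n" and pC=u] degen_T1[OF u p] degen_T2[OF u p] h by blast
qed

end

context WC
begin

lemma chain_aux: "\<forall>j t u v. Suc j \<le> n \<longrightarrow> n - Suc j = d \<longrightarrow> T j t u v (cst n) \<longrightarrow> E u v"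
proof (induction d)
  case 0
  show ?case
  proof (intro allI impI)
    fix j t u v assume a: "Suc j \<le> n" "n - Suc j = 0" "T j t u v (cst n)"
    have j: "j = n - 1" using a by simp
    obtain t' where "T j t' (cst n) v u" using shift[OF a(1) a(3)] by blast
    hence "E v u" unfolding E_def j by blast
    thus "E u v" by (rule E_sym)
  qed
next
  case (Suc d)
  show ?case
  proof (intro allI impI)
    fix j t u v assume a: "Suc j \<le> n" "n - Suc j = Suc d" "T j t u v (cst n)"
    obtain t' where "T j t' (cst n) v u" using shift[OF a(1) a(3)] by blast
    hence "T (Suc j) t' v u (cst n)" using T_reindex by simp
    moreover have "Suc (Suc j) \<le> n" "n - Suc (Suc j) = d" using a by auto
    ultimately have "E v u" using Suc.IH by blast
    thus "E u v" by (rule E_sym)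
  qed
qed

lemma chain: "Suc j \<le> n \<Longrightarrow> T j t u v (cst n) \<Longrightarrow> E u v"
  using chain_aux by blast

lemma E_R: "E u v \<Longrightarrow> \<exists>t. T (n - 1) t v u (cst n)"
  unfolding E_def using unshift[OF n1''] by blast

definition Mu :: "'a \<Rightarrow> 'a \<Rightarrow> 'a \<Rightarrow> bool" where
  "Mu a b r \<longleftrightarrow> (\<exists>t. T (n - 1) t a r b)"

lemma M_unique: "Mu a b r \<Longrightarrow> Mu a b r' \<Longrightarrow> E r r'"
proof -
  assume h: "Mu a b r" "Mu a b r'"
  then obtain t where t: "T (n - 1) t a r b" unfolding Mu_def by blast
  have b: "good n b" using T_faces[OF t n1''] by simp
  have "\<exists>t. T (n - 1) t r r' (cst n)"
    using TET2[OF n1'', where pA=a and pB=r and pC=b and pD=r' and pE=b and pF="cst n"] h degen_T1[OF b n1''] unfolding Mu_def by blast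
  thus ?thesis using chain[OF n1''] by blast
qed

lemma M_wd_a: "E a a' \<Longrightarrow> Mu a b r \<Longrightarrow> Mu a' b r' \<Longrightarrow> E r r'"
  unfolding Mu_def E_def using TET1[OF n1'', where pA="cst n" and pB=a and pC=a' and pF=b and pD=r and pE=r'] by blast

lemma M_wd_b: "E b b' \<Longrightarrow> Mu a b r \<Longrightarrow> Mu a b' r' \<Longrightarrow> E r r'"
proof -
  assume h: "E b b'" "Mu a b r" "Mu a b' r'"
  have "\<exists>t. T (n - 1) t b b' (cst n)" using E_R[OF E_sym[OF h(1)]] .
  hence "\<exists>t. T (n - 1) t r r' (cst n)"
    using TET2[OF n1'', where pA=a and pB=r and pC=b and pD=r' and pE=b' and pF="cst n"] h(2,3) unfolding Mu_def by blast
  thus ?thesis using chain[OF n1''] by blast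
qed

lemma M_assoc: "Mu a b ab \<Longrightarrow> Mu ab c abc \<Longrightarrow> Mu b c bc \<Longrightarrow> Mu a bc abc"
  unfolding Mu_def using TET1[OF n1'', where pA=a and pB=ab and pC=b and pD=abc and pE=bc and pF=c] by blast

lemma M_lunit: "Mu (cst n) a r \<Longrightarrow> E r a"
  unfolding Mu_def E_def by simp

lemma M_exists:
  assumes a: "good n a" and b: "good n b"
  shows "\<exists>t. T (n - 1) t a (face X n n t) b"
proof -
  obtain L where L: "n = Suc L" using n1 by (cases n) auto
  define y where "y c = (if c = L then a else if c = Suc (Suc L) then b else cst (Suc L))" for c
  have yc: "\<forall>c \<le> Suc (Suc L). c \<noteq> Suc L \<longrightarrow> good (Suc L) (y c) \<and>
              (\<forall>q \<le> Suc L. face X L q (y c) = (if q < c then (\<lambda>i j. cst L) q c else (\<lambda>i j. cst L) c (Suc q)))"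
    using a b good_face_cst[of a L] good_face_cst[of b L] good_cst face_cst unfolding y_def L by auto
  obtain z where zg: "good (Suc (Suc L)) z" and zf: "\<forall>c \<le> Suc (Suc L). c \<noteq> Suc L \<longrightarrow> face X (Suc L) c z = y c"
    using horn_G[OF _ _ yc] L by auto
  have "T (n - 1) z a (face X n n z) b"
  proof (unfold T_def, intro conjI allI impI)
    show "good (Suc n) z" using zg L by simp
    fix q assume q: "q \<le> Suc n"
    show "face X n q z = (if q = n - 1 then a else if q = Suc (n - 1) then face X n n z
       else if q = Suc (Suc (n - 1)) then b else cst n)"
    proof (cases "q = n")
      case True thus ?thesis using L by simp
    next
      case False
      hence "face X (Suc L) q z = y q" using zf q L by simp
      thus ?thesis using False L unfolding y_def by simp
    qed
  qed
  thus ?thesis by blast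
qed

lemma M_inv:
  assumes a: "good n a"
  shows "\<exists>b. Mu b a (cst n)"
proof -
  obtain L where L: "n = Suc L" using n1 by (cases n) auto
  define y where "y c = (if c = Suc (Suc L) then a else cst (Suc L))" for c
  have yc: "\<forall>c \<le> Suc (Suc L). c \<noteq> L \<longrightarrow> good (Suc L) (y c) \<and>
              (\<forall>q \<le> Suc L. face X L q (y c) = (if q < c then (\<lambda>i j. cst L) q c else (\<lambda>i j. cst L) c (Suc q)))"
    using a good_face_cst[of a L] good_cst face_cst unfolding y_def L by auto
  obtain z where zg: "good (Suc (Suc L)) z" and zf: "\<forall>c \<le> Suc (Suc L). c \<noteq> L \<longrightarrow> face X (Suc L) c z = y c"
    using horn_G[OF _ _ yc] L by auto
  have "T (n - 1) z (face X n (n - 1) z) (cst n) a"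
  proof (unfold T_def, intro conjI allI impI)
    show "good (Suc n) z" using zg L by simp
    fix q assume q: "q \<le> Suc n"
    show "face X n q z = (if q = n - 1 then face X n (n - 1) z else if q = Suc (n - 1) then cst n
       else if q = Suc (Suc (n - 1)) then a else cst n)"
    proof (cases "q = n - 1")
      case True thus ?thesis by simp
    next
      case False
      hence "face X (Suc L) q z = y q" using zf q L by simp
      thus ?thesis using False L unfolding y_def by simp
    qed
  qed
  thus ?thesis unfolding Mu_def by blast
qed

end

context WC
begin

lemma sprod_simps:
  "Simp (sprod (Delta n) (Delta_t 1)) p = dsimp n p \<times> dsimp 1 p"
  "Act (sprod (Delta n) (Delta_t 1)) P Q \<beta> gd = (dact P Q \<beta> (fst gd), dact P Q \<beta> (snd gd))"
  "Thin (sprod (Delta n) (Delta_t 1)) p = ddegen n p \<times> (ddegen 1 p \<union> (if p = 1 then {did 1} else {}))"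
  unfolding sprod_def Delta_def Delta_t_def dstd_def by auto

definition phi :: "(nat \<Rightarrow> nat) \<Rightarrow> (nat \<Rightarrow> nat) \<Rightarrow> nat \<Rightarrow> nat" where
  "phi \<gamma> \<delta> = (\<lambda>i. if \<delta> i = 1 \<and> \<gamma> i = n then Suc n else \<gamma> i)"

lemma phi_mono: "\<gamma> \<in> dsimp n p \<Longrightarrow> \<delta> \<in> dsimp 1 p \<Longrightarrow> mono_map p (Suc n) (phi \<gamma> \<delta>)"
proof -
  assume g: "\<gamma> \<in> dsimp n p" and d: "\<delta> \<in> dsimp 1 p"
  have gb: "\<And>i. i \<le> p \<Longrightarrow> \<gamma> i \<le> n" and gm: "\<And>i j. i \<le> j \<Longrightarrow> j \<le> p \<Longrightarrow> \<gamma> i \<le> \<gamma> j"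
    using g unfolding dsimp_def mono_map_def by auto
  have db: "\<And>i. i \<le> p \<Longrightarrow> \<delta> i \<le> 1" and dm: "\<And>i j. i \<le> j \<Longrightarrow> j \<le> p \<Longrightarrow> \<delta> i \<le> \<delta> j"
    using d unfolding dsimp_def mono_map_def by auto
  show ?thesis unfolding mono_map_def phi_def
  proof (intro conjI allI impI)
    fix i assume "i \<le> p" thus "(if \<delta> i = 1 \<and> \<gamma> i = n then Suc n else \<gamma> i) \<le> Suc n" using gb[of i] by auto
  next
    fix i j assume ij: "i \<le> j" "j \<le> p"
    have "\<gamma> i \<le> \<gamma> j" "\<delta> i \<le> \<delta> j" "\<gamma> j \<le> n" "\<delta> j \<le> 1" using gm dm gb db ij by auto
    thus "(if \<delta> i = 1 \<and> \<gamma> i = n then Suc n else \<gamma> i) \<le> (if \<delta> j = 1 \<and> \<gamma> j = n then Suc n else \<gamma> j)"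
      by auto
  qed
qed

lemma ddegen_pos: "\<gamma> \<in> ddegen N p \<Longrightarrow> 1 \<le> p"
proof (rule ccontr)
  assume a: "\<gamma> \<in> ddegen N p" "\<not> 1 \<le> p"
  hence p0: "p = 0" by simp
  have i: "inj_on \<gamma> {..0::nat}" by (auto simp: inj_on_def)
  have "\<not> inj_on \<gamma> {..p}" using a(1) unfolding ddegen_def by simp
  thus False using i p0 by simp
qed

lemma E_hrel:
  assumes e: "E b a"
  shows "hrel X x n a b"
proof -
  obtain t where t: "T (n - 1) t (cst n) b a" using e unfolding E_def by blast
  have ga: "good n a" and gb: "good n b" using T_faces[OF t n1''] by auto
  have tg: "good (Suc n) t" using t T_def by simp
  have tS: "t \<in> Simp X (Suc n)" using good_simp[OF tg] .
  have tf: "\<And>q. q \<le> Suc n \<Longrightarrow> face X n q t = (if q = n then b else if q = Suc n then a else cst n)"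
    using t n1 unfolding T_def by auto
  have aS: "a \<in> sphere_simps X x n" and bS: "b \<in> sphere_simps X x n" using ga gb sphere_good by auto
  define H where "H p gd = Act X (Suc n) p (phi (fst gd) (snd gd)) t" for p gd
  have Hsm: "smap (sprod (Delta n) (Delta_t 1)) X H"
    unfolding smap_def sprod_simps
  proof (intro conjI allI impI)
    fix p gd assume "gd \<in> dsimp n p \<times> dsimp 1 p"
    thus "H p gd \<in> Simp X p" unfolding H_def using ss_simp[OF ss phi_mono tS] by auto
  next
    fix p gd assume a: "gd \<in> ddegen n p \<times> (ddegen 1 p \<union> (if p = 1 then {did 1} else {}))"
    have p1: "1 \<le> p" using a ddegen_pos by auto
    have g: "fst gd \<in> dsimp n p" using a unfolding ddegen_def by auto
    have d: "snd gd \<in> dsimp 1 p" using a did_dsimp unfolding ddegen_def by (auto split: if_splits)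
    have m: "mono_map p (Suc n) (phi (fst gd) (snd gd))" by (rule phi_mono[OF g d])
    have HS: "H p gd \<in> Simp X p" unfolding H_def by (rule ss_simp[OF ss m tS])
    show "H p gd \<in> Thin X p"
    proof (cases "n \<le> p")
      case True thus ?thesis using thin_big HS by blast
    next
      case False
      have "card (phi (fst gd) (snd gd) ` {..p}) \<le> card {..p}" by (rule card_image_le) simp
      hence "card (phi (fst gd) (snd gd) ` {..p}) \<le> n" using False by simp
      hence "H p gd = cst p" unfolding H_def using good_use[OF tg m] by simp
      thus ?thesis using cst_thin p1 by simp
    qed
  next
    fix P Q \<beta> gd assume b: "mono_map Q P \<beta>" and a: "gd \<in> dsimp n P \<times> dsimp 1 P"
    have g: "fst gd \<in> dsimp n P" and d: "snd gd \<in> dsimp 1 P" using a by auto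
    have m: "mono_map P (Suc n) (phi (fst gd) (snd gd))" by (rule phi_mono[OF g d])
    have m2: "mono_map Q (Suc n) (phi (dact P Q \<beta> (fst gd)) (dact P Q \<beta> (snd gd)))"
      by (rule phi_mono[OF dact_dsimp[OF g b] dact_dsimp[OF d b]])
    have "H Q (dact P Q \<beta> (fst gd), dact P Q \<beta> (snd gd)) = Act X (Suc n) Q (phi (fst gd) (snd gd) \<circ> \<beta>) t"
      unfolding H_def by (simp, rule ss_cong[OF ss m2 _ tS]) (simp add: phi_def dact_def)
    also have "\<dots> = Act X P Q \<beta> (H P gd)" unfolding H_def by (rule ss_comp[OF ss m b tS, symmetric])
    finally show "H Q (dact P Q \<beta> (fst gd), dact P Q \<beta> (snd gd)) = Act X P Q \<beta> (H P gd)" .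
  qed
  have Hc: "H p (\<gamma>, c0 p) = Act X n p \<gamma> a \<and> H p (\<gamma>, c1 p) = Act X n p \<gamma> b" if g: "\<gamma> \<in> dsimp n p" for p \<gamma>
  proof
    have gm: "mono_map p n \<gamma>" using g unfolding dsimp_def by simp
    have gb: "\<And>i. i \<le> p \<Longrightarrow> \<gamma> i \<le> n" using gm unfolding mono_map_def by auto
    have m1: "mono_map p (Suc n) (face_map (Suc n) \<circ> \<gamma>)" by (rule mono_comp[OF mono_face gm])
    have "Act X n p \<gamma> a = Act X n p \<gamma> (face X n (Suc n) t)" using tf by simp
    also have "\<dots> = Act X (Suc n) p (face_map (Suc n) \<circ> \<gamma>) t" unfolding face_def by (rule ss_comp[OF ss mono_face gm tS])
    also have "\<dots> = H p (\<gamma>, c0 p)" unfolding H_def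
      by (simp, rule ss_cong[OF ss m1 _ tS]) (auto simp: phi_def c0_def face_map_def less_Suc_eq_le gb)
    finally show "H p (\<gamma>, c0 p) = Act X n p \<gamma> a" by simp
    have m2: "mono_map p (Suc n) (face_map n \<circ> \<gamma>)" by (rule mono_comp[OF mono_face gm])
    have "Act X n p \<gamma> b = Act X n p \<gamma> (face X n n t)" using tf by simp
    also have "\<dots> = Act X (Suc n) p (face_map n \<circ> \<gamma>) t" unfolding face_def by (rule ss_comp[OF ss mono_face gm tS])
    also have "\<dots> = H p (\<gamma>, c1 p)" unfolding H_def
      by (simp, rule ss_cong[OF ss m2 _ tS]) (use gb in \<open>fastforce simp: phi_def c1_def face_map_def le_neq_implies_less\<close>)
    finally show "H p (\<gamma>, c1 p) = Act X n p \<gamma> b" by simp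
  qed
  have Hb: "H p (\<gamma>, \<delta>) = Act X n p \<gamma> a" if g: "\<gamma> \<in> bdry_simp n p" and d: "\<delta> \<in> dsimp 1 p" for p \<gamma> \<delta>
  proof -
    have gd: "\<gamma> \<in> dsimp n p" using g unfolding bdry_simp_def by simp
    obtain v where v: "v \<le> n" "v \<notin> \<gamma> ` {..p}" using g unfolding bdry_simp_def by auto
    have gb: "\<And>i. i \<le> p \<Longrightarrow> \<gamma> i \<le> n" using gd unfolding dsimp_def mono_map_def by auto
    have m: "mono_map p (Suc n) (phi \<gamma> \<delta>)" by (rule phi_mono[OF gd d])
    have rhs: "Act X n p \<gamma> a = cst p" using aS g unfolding sphere_simps_def by simp
    have pv: "v \<notin> phi \<gamma> \<delta> ` {..p}" using v unfolding phi_def by auto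
    show ?thesis
    proof (cases "v = n")
      case True
      have "phi \<gamma> \<delta> i \<in> {..Suc n} - {n, Suc n}" if i: "i \<le> p" for i
      proof -
        have "\<gamma> i \<noteq> n" using v True i by auto
        thus ?thesis using gb[OF i] unfolding phi_def by auto
      qed
      hence "phi \<gamma> \<delta> ` {..p} \<subseteq> {..Suc n} - {n, Suc n}" by auto
      hence "card (phi \<gamma> \<delta> ` {..p}) \<le> card ({..Suc n} - {n, Suc n})" by (intro card_mono) auto
      hence "card (phi \<gamma> \<delta> ` {..p}) \<le> n" by simp
      thus ?thesis unfolding H_def rhs using good_use[OF tg m] by simp
    next
      case False
      have "H p (\<gamma>, \<delta>) = Act X n p (rem v (phi \<gamma> \<delta>)) (face X n v t)"
        unfolding H_def by (simp, rule act_factor[OF ss m _ pv tS]) (use v in simp)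
      also have "\<dots> = Act X n p (rem v (phi \<gamma> \<delta>)) (cst n)" using tf v False by simp
      also have "\<dots> = cst p" by (rule act_cst[OF mono_rem[OF m _ pv]]) (use v in simp)
      finally show ?thesis using rhs by simp
    qed
  qed
  have "homotopic_rel_bdry X n a b" unfolding homotopic_rel_bdry_def
    using aS bS Hsm Hc Hb unfolding sphere_simps_def by auto
  thus ?thesis unfolding hrel_def using aS bS by simp
qed

end

context WC
begin

definition gam :: "nat \<Rightarrow> nat \<Rightarrow> nat" where
  "gam j = (\<lambda>i. if i \<le> j then i else if i \<le> Suc n then i - 1 else 0)"
definition del :: "nat \<Rightarrow> nat \<Rightarrow> nat" where
  "del j = (\<lambda>i. if i \<le> j then 0 else if i \<le> Suc n then 1 else 0)"
definition dl :: "nat \<Rightarrow> nat \<Rightarrow> nat" where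
  "dl j = (\<lambda>i. if i \<le> n \<and> j \<le> i then 1 else 0)"

lemma gam_ds: "j \<le> n \<Longrightarrow> gam j \<in> dsimp n (Suc n)"
  unfolding gam_def dsimp_def mono_map_def by auto
lemma del_ds: "del j \<in> dsimp 1 (Suc n)"
  unfolding del_def dsimp_def mono_map_def by auto
lemma dl_ds: "dl j \<in> dsimp 1 n"
  unfolding dl_def dsimp_def mono_map_def by auto

lemma dact_gam1: "dact (Suc n) n (face_map j) (gam j) = did n"
  unfolding dact_def gam_def did_def face_map_def by (auto simp: fun_eq_iff)
lemma dact_gam2: "dact (Suc n) n (face_map (Suc j)) (gam j) = did n"
  unfolding dact_def gam_def did_def face_map_def by (auto simp: fun_eq_iff)
lemma dact_del1: "dact (Suc n) n (face_map j) (del j) = dl j"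
  unfolding dact_def del_def dl_def face_map_def by (auto simp: fun_eq_iff)
lemma dact_del2: "dact (Suc n) n (face_map (Suc j)) (del j) = dl (Suc j)"
  unfolding dact_def del_def dl_def face_map_def by (auto simp: fun_eq_iff)
lemma dl0: "dl 0 = c1 n" unfolding dl_def c1_def by (auto simp: fun_eq_iff)
lemma dlS: "dl (Suc n) = c0 n" unfolding dl_def c0_def by (auto simp: fun_eq_iff)

lemma gam_bdry:
  assumes j: "j \<le> n" and q: "q \<le> Suc n" "q \<noteq> j" "q \<noteq> Suc j"
  shows "dact (Suc n) n (face_map q) (gam j) \<in> bdry_simp n n"
proof -
  have ds: "dact (Suc n) n (face_map q) (gam j) \<in> dsimp n n"
    by (rule dact_dsimp[OF gam_ds[OF j] mono_face])
  define v where "v = (if q < j then q else q - 1)"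
  have v1: "v \<le> n" using q j unfolding v_def by auto
  have v2: "v \<notin> dact (Suc n) n (face_map q) (gam j) ` {..n}"
  proof
    assume "v \<in> dact (Suc n) n (face_map q) (gam j) ` {..n}"
    then obtain i where i: "i \<le> n" "v = dact (Suc n) n (face_map q) (gam j) i" by auto
    show False
    proof (cases "q < j")
      case True
      thus False using i unfolding v_def gam_def face_map_def dact_def by (simp split: if_splits)
    next
      case F2: False
      hence "Suc (Suc j) \<le> q" using q by simp
      thus False using i F2 unfolding v_def gam_def face_map_def dact_def by (simp split: if_splits)
    qed
  qed
  show ?thesis unfolding bdry_simp_def using ds v1 v2 by blast
qed

lemma did_bdry:
  assumes L: "n = Suc L" and q: "q \<le> n"
  shows "dact n L (face_map q) (did n) \<in> bdry_simp n L"
proof -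
  have ds: "dact n L (face_map q) (did n) \<in> dsimp n L"
    by (rule dact_dsimp[OF did_dsimp]) (use mono_face[of L q] L in simp)
  have "q \<notin> dact n L (face_map q) (did n) ` {..L}"
    unfolding dact_def did_def face_map_def using L by auto
  thus ?thesis unfolding bdry_simp_def using ds q by blast
qed

lemma hrel_E:
  assumes h: "hrel X x n a b"
  shows "E a b"
proof -
  have aS: "a \<in> sphere_simps X x n" and bS: "b \<in> sphere_simps X x n" using h unfolding hrel_def by auto
  obtain H where Hsm: "smap (sprod (Delta n) (Delta_t 1)) X H"
    and Hc: "\<And>m \<gamma>. \<gamma> \<in> dsimp n m \<Longrightarrow> H m (\<gamma>, c0 m) = Act X n m \<gamma> a \<and> H m (\<gamma>, c1 m) = Act X n m \<gamma> b"
    and Hb: "\<And>m \<gamma> \<delta>. \<gamma> \<in> bdry_simp n m \<Longrightarrow> \<delta> \<in> dsimp 1 m \<Longrightarrow> H m (\<gamma>, \<delta>) = Act X n m \<gamma> a"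
    using h unfolding hrel_def homotopic_rel_bdry_def by blast
  have Hb': "H m (\<gamma>, \<delta>) = cst m" if "\<gamma> \<in> bdry_simp n m" "\<delta> \<in> dsimp 1 m" for m \<gamma> \<delta>
    using Hb[OF that] aS that(1) unfolding sphere_simps_def by simp
  have HS: "H P (\<gamma>, \<delta>) \<in> Simp X P" if "\<gamma> \<in> dsimp n P" "\<delta> \<in> dsimp 1 P" for P \<gamma> \<delta>
    using Hsm that unfolding smap_def sprod_simps by auto
  have Hnat: "H Q (dact P Q \<beta> \<gamma>, dact P Q \<beta> \<delta>) = Act X P Q \<beta> (H P (\<gamma>, \<delta>))"
    if "\<gamma> \<in> dsimp n P" "\<delta> \<in> dsimp 1 P" "mono_map Q P \<beta>" for P Q \<beta> \<gamma> \<delta>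
  proof -
    have "H Q (Act (sprod (Delta n) (Delta_t 1)) P Q \<beta> (\<gamma>, \<delta>)) = Act X P Q \<beta> (H P (\<gamma>, \<delta>))"
      using Hsm that unfolding smap_def sprod_simps(1) by blast
    thus ?thesis unfolding sprod_simps by simp
  qed
  obtain L where L: "n = Suc L" using n1 by (cases n) auto
  define u where "u j = H n (did n, dl j)" for j
  define hh where "hh j = H (Suc n) (gam j, del j)" for j
  have ug: "good n (u j)" for j
  proof -
    have uS: "u j \<in> Simp X (Suc L)" unfolding u_def using HS[OF did_dsimp dl_ds] L by simp
    have "face X L q (u j) = cst L" if q: "q \<le> Suc L" for q
    proof -
      have "face X L q (u j) = Act X n L (face_map q) (H n (did n, dl j))"
        unfolding face_def u_def L by simp
      also have "\<dots> = H L (dact n L (face_map q) (did n), dact n L (face_map q) (dl j))"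
        by (rule Hnat[OF did_dsimp dl_ds, symmetric]) (use L mono_face in simp)
      also have "\<dots> = cst L"
        by (rule Hb'[OF did_bdry[OF L]]) (use q L dact_dsimp[OF dl_ds, of L "face_map q" j] mono_face in auto)
      finally show ?thesis .
    qed
    hence "good (Suc L) (u j)" using good_from_faces[OF uS] good_cst L by simp
    thus ?thesis using L by simp
  qed
  have hface: "face X n q (hh j) = (if q = j then u j else if q = Suc j then u (Suc j) else cst n)"
    if j: "j \<le> n" and q: "q \<le> Suc n" for j q
  proof -
    have "face X n q (hh j) = H n (dact (Suc n) n (face_map q) (gam j), dact (Suc n) n (face_map q) (del j))"
      unfolding face_def hh_def by (rule Hnat[OF gam_ds[OF j] del_ds mono_face, symmetric])
    also have "\<dots> = (if q = j then u j else if q = Suc j then u (Suc j) else cst n)"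
    proof (cases "q = j \<or> q = Suc j")
      case True thus ?thesis unfolding u_def using dact_gam1 dact_gam2 dact_del1 dact_del2 by auto
    next
      case False
      thus ?thesis using Hb'[OF gam_bdry[OF j q] dact_dsimp[OF del_ds mono_face]] by auto
    qed
    finally show ?thesis .
  qed
  have hg: "good (Suc n) (hh j)" if j: "j \<le> n" for j
  proof (rule good_from_faces)
    show "hh j \<in> Simp X (Suc n)" unfolding hh_def by (rule HS[OF gam_ds[OF j] del_ds])
    show "n \<le> Suc n" by simp
    fix v assume "v \<le> Suc n"
    thus "good n (face X n v (hh j))" using hface[OF j] ug good_cst by simp
  qed
  have step: "E (u j) (u (Suc j))" if j: "j \<le> n" for j
  proof (cases "j < n")
    case True
    have "T j (hh j) (u j) (u (Suc j)) (cst n)" unfolding T_def using hg[OF j] hface[OF j] by auto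
    thus ?thesis by (rule chain[rotated]) (use True in simp)
  next
    case False
    hence jn: "j = n" using j by simp
    have "T (n - 1) (hh j) (cst n) (u j) (u (Suc j))" unfolding T_def using hg[OF j] hface[OF j] jn n1 by auto
    thus ?thesis unfolding E_def by blast
  qed
  have "j \<le> Suc n \<Longrightarrow> E (u 0) (u j)" for j
  proof (induction j)
    case 0 show ?case using E_refl ug by simp
  next
    case (Suc j) thus ?case using E_trans step by simp
  qed
  hence "E (u 0) (u (Suc n))" by simp
  moreover have "u 0 = b" unfolding u_def dl0 using Hc[OF did_dsimp] ss_id'[OF ss] bS
    unfolding sphere_simps_def did_def by auto
  moreover have "u (Suc n) = a" unfolding u_def dlS using Hc[OF did_dsimp] ss_id'[OF ss] aS
    unfolding sphere_simps_def did_def by auto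
  ultimately show ?thesis using E_sym by simp
qed

end

context WC
begin

lemma good_yon: "good (Suc n) t \<Longrightarrow> smap (Delta_k n (Suc n)) X (yon X (Suc n) t)"
proof -
  assume tg: "good (Suc n) t"
  have tS: "t \<in> Simp X (Suc n)" using good_simp[OF tg] .
  show ?thesis unfolding smap_def Delta_k_def dstd_def yon_def
  proof (simp only: sset.simps, intro conjI allI impI)
    fix p \<alpha> assume "\<alpha> \<in> dsimp (Suc n) p"
    thus "Act X (Suc n) p \<alpha> t \<in> Simp X p" using ss_simp[OF ss _ tS] unfolding dsimp_def by auto
  next
    fix p \<alpha> assume a: "\<alpha> \<in> thin_k n (Suc n) p"
    have m: "mono_map p (Suc n) \<alpha>" using a unfolding thin_k_def ddegen_def dsimp_def by auto
    have AS: "Act X (Suc n) p \<alpha> t \<in> Simp X p" by (rule ss_simp[OF ss m tS])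
    show "Act X (Suc n) p \<alpha> t \<in> Thin X p"
    proof (cases "n \<le> p")
      case True thus ?thesis using thin_big AS by blast
    next
      case False
      have t0: "thin_k n (Suc n) 0 = {}" by (rule thin_k_0) auto
      have p0: "p \<noteq> 0"
      proof
        assume "p = 0" thus False using a t0 by auto
      qed
      have "card (\<alpha> ` {..p}) \<le> card {..p}" by (rule card_image_le) simp
      hence "card (\<alpha> ` {..p}) \<le> n" using False by simp
      hence "Act X (Suc n) p \<alpha> t = cst p" using good_use[OF tg m] by simp
      thus ?thesis using cst_thin p0 by (simp add: Suc_le_eq)
    qed
  next
    fix p q \<beta> \<alpha> assume b: "mono_map q p \<beta>" and a: "\<alpha> \<in> dsimp (Suc n) p"
    have m: "mono_map p (Suc n) \<alpha>" using a unfolding dsimp_def by simp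
    have "Act X (Suc n) q (dact p q \<beta> \<alpha>) t = Act X (Suc n) q (\<alpha> \<circ> \<beta>) t"
      by (rule ss_cong[OF ss dact_mono[OF m b] _ tS]) (simp add: dact_def)
    also have "\<dots> = Act X p q \<beta> (Act X (Suc n) p \<alpha> t)" by (rule ss_comp[OF ss m b tS, symmetric])
    finally show "Act X (Suc n) q (dact p q \<beta> \<alpha>) t = Act X p q \<beta> (Act X (Suc n) p \<alpha> t)" .
  qed
qed

lemma T_filler: "T (n - 1) t a r b \<Longrightarrow> mult_filler X x n t a b \<and> face X n n t = r"
proof -
  assume h: "T (n - 1) t a r b"
  have tg: "good (Suc n) t" using h T_def by simp
  have f: "\<And>q. q \<le> Suc n \<Longrightarrow> face X n q t = (if q = n - 1 then a else if q = n then r else if q = Suc n then b else cst n)"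
    using h n1 unfolding T_def by auto
  show ?thesis unfolding mult_filler_def
    using good_simp[OF tg] good_yon[OF tg] f[of "n - 1"] f[of n] f[of "Suc n"] f n1 by auto
qed

lemma filler_T:
  assumes a: "good n a" and b: "good n b" and mf: "mult_filler X x n t a b"
  shows "T (n - 1) t a (face X n n t) b"
proof -
  obtain L where L: "n = Suc L" using n1 by (cases n) auto
  have tS: "t \<in> Simp X (Suc (Suc L))" using mf L unfolding mult_filler_def by simp
  have fa: "face X (Suc L) L t = a" and fb: "face X (Suc L) (Suc (Suc L)) t = b"
    and fo: "\<And>i. i \<le> Suc (Suc L) \<Longrightarrow> i \<noteq> L \<Longrightarrow> i \<noteq> Suc L \<Longrightarrow> i \<noteq> Suc (Suc L) \<Longrightarrow> face X (Suc L) i t = cst (Suc L)"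
    using mf L unfolding mult_filler_def by auto
  define c where "c = face X (Suc L) (Suc L) t"
  have cS: "c \<in> Simp X (Suc L)" unfolding c_def face_def by (rule ss_simp[OF ss mono_face tS])
  have cf: "face X L q c = cst L" if q: "q \<le> Suc L" for q
  proof (cases "q < Suc L")
    case True
    have "face X L q c = face X L L (face X (Suc L) q t)"
      unfolding c_def using face_face[OF ss True tS] by simp
    also have "\<dots> = cst L"
    proof (cases "q = L")
      case True thus ?thesis using fa good_face_cst[OF a] L by simp
    next
      case False thus ?thesis using fo[of q] True face_cst by simp
    qed
    finally show ?thesis .
  next
    case False
    hence qL: "q = Suc L" using q by simp
    have "face X L (Suc L) (face X (Suc L) (Suc (Suc L)) t) = face X L (Suc L) (face X (Suc L) (Suc L) t)"
      using face_face[OF ss _ tS, of "Suc L" "Suc (Suc L)"] by simp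
    hence "face X L q c = face X L (Suc L) b" unfolding c_def qL fb by simp
    also have "\<dots> = cst L" using good_face_cst[OF b] L by simp
    finally show ?thesis .
  qed
  have cg: "good (Suc L) c" using good_from_faces[OF cS] cf good_cst L by simp
  have tg: "good (Suc (Suc L)) t"
  proof (rule good_from_faces[OF tS])
    show "n \<le> Suc (Suc L)" using L by simp
    fix v assume v: "v \<le> Suc (Suc L)"
    show "good (Suc L) (face X (Suc L) v t)"
      using fa fb fo[OF v] cg a b good_cst L unfolding c_def by (cases "v = L \<or> v = Suc L \<or> v = Suc (Suc L)") auto
  qed
  show ?thesis unfolding T_def
  proof (intro conjI allI impI)
    show "good (Suc n) t" using tg L by simp
    fix q assume q: "q \<le> Suc n"
    show "face X n q t = (if q = n - 1 then a else if q = Suc (n - 1) then face X n n t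
       else if q = Suc (Suc (n - 1)) then b else cst n)"
      using fa fb fo[of q] q L by auto
  qed
qed

abbreviation "S \<equiv> sphere_simps X x n"
abbreviation "cls \<equiv> hclass X x n"

lemma equiv_E: "a \<in> S \<Longrightarrow> equivclp (hrel X x n) a b \<Longrightarrow> E a b"
proof -
  assume a: "a \<in> S" and h: "equivclp (hrel X x n) a b"
  from h show "E a b"
  proof (induction rule: equivclp_induct)
    case base thus ?case using E_refl a sphere_good by simp
  next
    case (step y z)
    from step.hyps(2) have "E y z" using hrel_E E_sym by blast
    thus ?case using step.IH E_trans by blast
  qed
qed

lemma E_equiv: "E a b \<Longrightarrow> equivclp (hrel X x n) a b"
  using E_hrel E_sym by blast

lemma cls_eq: "a \<in> S \<Longrightarrow> cls a = {b. E a b}"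
  unfolding hclass_def using equiv_E E_equiv E_good sphere_good by blast

lemma cls_eq_iff: "a \<in> S \<Longrightarrow> a' \<in> S \<Longrightarrow> cls a = cls a' \<longleftrightarrow> E a a'"
proof -
  assume a: "a \<in> S" and a': "a' \<in> S"
  show ?thesis
  proof
    assume h: "cls a = cls a'"
    have "a' \<in> cls a'" using cls_eq[OF a'] E_refl a' sphere_good by simp
    hence "a' \<in> cls a" using h by simp
    thus "E a a'" using cls_eq[OF a] by simp
  next
    assume "E a a'"
    thus "cls a = cls a'" unfolding cls_eq[OF a] cls_eq[OF a'] using E_trans E_sym by blast
  qed
qed

lemma mult_eq:
  assumes a: "a \<in> S" and b: "b \<in> S" and r: "Mu a b r"
  shows "mult (tau X x n) (cls a) (cls b) = cls r"
proof -
  have ga: "good n a" and gb: "good n b" using a b sphere_good by auto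
  obtain t where t: "T (n - 1) t a r b" using r unfolding Mu_def by blast
  have rS: "r \<in> S" using T_faces[OF t n1''] sphere_good by simp
  define P where "P C \<longleftrightarrow> (\<exists>a'\<in>cls a. \<exists>b'\<in>cls b. \<exists>t. mult_filler X x n t a' b' \<and> C = cls (face X n n t))" for C
  have "P (cls r)" unfolding P_def
    using T_filler[OF t] cls_eq[OF a] cls_eq[OF b] E_refl ga gb by blast
  moreover have "C = cls r" if "P C" for C
  proof -
    obtain a' b' t' where a': "a' \<in> cls a" and b': "b' \<in> cls b" and mf: "mult_filler X x n t' a' b'"
      and C: "C = cls (face X n n t')" using \<open>P C\<close> unfolding P_def by blast
    have Ea: "E a a'" and Eb: "E b b'" using a' b' cls_eq[OF a] cls_eq[OF b] by auto
    have ga': "good n a'" and gb': "good n b'" using Ea Eb E_good by auto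
    have m1: "Mu a' b' (face X n n t')" unfolding Mu_def using filler_T[OF ga' gb' mf] by blast
    obtain t1 where t1: "T (n - 1) t1 a' (face X n n t1) b" using M_exists[OF ga' gb] by blast
    have m2: "Mu a' b (face X n n t1)" unfolding Mu_def using t1 by blast
    obtain t2 where t2: "T (n - 1) t2 a' (face X n n t2) b'" using M_exists[OF ga' gb'] by blast
    have m3: "Mu a' b' (face X n n t2)" unfolding Mu_def using t2 by blast
    have "E r (face X n n t1)" by (rule M_wd_a[OF Ea r m2])
    moreover have "E (face X n n t1) (face X n n t2)" by (rule M_wd_b[OF Eb m2 m3])
    moreover have "E (face X n n t2) (face X n n t')" by (rule M_unique[OF m3 m1])
    ultimately have E1: "E r (face X n n t')" using E_trans by blast
    have "face X n n t' \<in> S" using E_good[OF E1] sphere_good by simp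
    hence "cls r = cls (face X n n t')" using cls_eq_iff[OF rS] E1 by blast
    thus ?thesis unfolding C by simp
  qed
  ultimately have "(SOME C. P C) = cls r" by (rule some_equality)
  thus ?thesis unfolding tau_def P_def by simp
qed

lemma prod_exists: "a \<in> S \<Longrightarrow> b \<in> S \<Longrightarrow> \<exists>r. r \<in> S \<and> Mu a b r"
proof -
  assume a: "a \<in> S" and b: "b \<in> S"
  obtain t where t: "T (n - 1) t a (face X n n t) b" using M_exists a b sphere_good by blast
  thus ?thesis unfolding Mu_def using T_faces[OF t n1''] sphere_good by blast
qed

lemma tau_group: "group (tau X x n)"
proof (rule groupI)
  have car: "carrier (tau X x n) = cls ` S" unfolding tau_def by simp
  have one: "one (tau X x n) = cls (cst n)" unfolding tau_def by simp
  have eS: "cst n \<in> S" using good_cst sphere_good by simp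
  show "\<one>\<^bsub>tau X x n\<^esub> \<in> carrier (tau X x n)" unfolding car one using eS by simp
  fix A B assume A: "A \<in> carrier (tau X x n)" and B: "B \<in> carrier (tau X x n)"
  then obtain a b where a: "a \<in> S" "A = cls a" and b: "b \<in> S" "B = cls b" unfolding car by auto
  obtain r where r: "r \<in> S" "Mu a b r" using prod_exists[OF a(1) b(1)] by blast
  show "A \<otimes>\<^bsub>tau X x n\<^esub> B \<in> carrier (tau X x n)" unfolding car a(2) b(2) mult_eq[OF a(1) b(1) r(2)]
    using r by simp
next
  have car: "carrier (tau X x n) = cls ` S" unfolding tau_def by simp
  fix A B C assume "A \<in> carrier (tau X x n)" "B \<in> carrier (tau X x n)" "C \<in> carrier (tau X x n)"
  then obtain a b c where a: "a \<in> S" "A = cls a" and b: "b \<in> S" "B = cls b" and c: "c \<in> S" "C = cls c"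
    unfolding car by auto
  obtain ab where ab: "ab \<in> S" "Mu a b ab" using prod_exists[OF a(1) b(1)] by blast
  obtain abc where abc: "abc \<in> S" "Mu ab c abc" using prod_exists[OF ab(1) c(1)] by blast
  obtain bc where bc: "bc \<in> S" "Mu b c bc" using prod_exists[OF b(1) c(1)] by blast
  obtain r where r: "r \<in> S" "Mu a bc r" using prod_exists[OF a(1) bc(1)] by blast
  have m: "Mu a bc abc" by (rule M_assoc[OF ab(2) abc(2) bc(2)])
  have "E abc r" by (rule M_unique[OF m r(2)])
  hence "cls abc = cls r" using cls_eq_iff[OF abc(1) r(1)] by simp
  thus "A \<otimes>\<^bsub>tau X x n\<^esub> B \<otimes>\<^bsub>tau X x n\<^esub> C = A \<otimes>\<^bsub>tau X x n\<^esub> (B \<otimes>\<^bsub>tau X x n\<^esub> C)"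
    unfolding a(2) b(2) c(2) mult_eq[OF a(1) b(1) ab(2)] mult_eq[OF ab(1) c(1) abc(2)]
      mult_eq[OF b(1) c(1) bc(2)] mult_eq[OF a(1) bc(1) r(2)] .
next
  have car: "carrier (tau X x n) = cls ` S" unfolding tau_def by simp
  have one: "one (tau X x n) = cls (cst n)" unfolding tau_def by simp
  have eS: "cst n \<in> S" using good_cst sphere_good by simp
  fix A assume "A \<in> carrier (tau X x n)"
  then obtain a where a: "a \<in> S" "A = cls a" unfolding car by auto
  obtain r where r: "r \<in> S" "Mu (cst n) a r" using prod_exists[OF eS a(1)] by blast
  have "E r a" by (rule M_lunit[OF r(2)])
  thus "\<one>\<^bsub>tau X x n\<^esub> \<otimes>\<^bsub>tau X x n\<^esub> A = A"
    unfolding one a(2) mult_eq[OF eS a(1) r(2)] using cls_eq_iff[OF r(1) a(1)] by simp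
next
  have car: "carrier (tau X x n) = cls ` S" unfolding tau_def by simp
  have one: "one (tau X x n) = cls (cst n)" unfolding tau_def by simp
  have eS: "cst n \<in> S" using good_cst sphere_good by simp
  fix A assume "A \<in> carrier (tau X x n)"
  then obtain a where a: "a \<in> S" "A = cls a" unfolding car by auto
  obtain b where b: "Mu b a (cst n)" using M_inv a(1) sphere_good by blast
  have bS: "b \<in> S" using b T_faces[OF _ n1''] sphere_good unfolding Mu_def by blast
  have "cls b \<otimes>\<^bsub>tau X x n\<^esub> A = \<one>\<^bsub>tau X x n\<^esub>"
    unfolding one a(2) mult_eq[OF bS a(1) b] ..
  moreover have "cls b \<in> carrier (tau X x n)" unfolding car using bS by simp
  ultimately show "\<exists>y\<in>carrier (tau X x n). y \<otimes>\<^bsub>tau X x n\<^esub> A = \<one>\<^bsub>tau X x n\<^esub>" by blast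
qed

end

theorem mainTheorem6:
  fixes X :: "'a sset" and x :: 'a and m :: nat
  assumes "1 \<le> m"
    and "weak_complicial X"
    and "\<forall>k\<ge>m. Simp X k \<subseteq> Thin X k"
    and "x \<in> Simp X 0"
  shows "\<forall>n\<ge>m. group (tau X x n)"
proof (intro allI impI)
  fix n assume n: "m \<le> n"
  interpret WC X x n
    using assms n by unfold_locales auto
  show "group (tau X x n)" by (rule tau_group)
qed

end
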